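(* Let $\mathcal G$ be a network as in the context, let $Y$ be a subspace of $\mathbb C^{4E}$ and $R$ a (not necessarily self-adjoint) linear operator on $Y$. Consider the sesquilinear form $$\mathfrak a(u,v)=\sum_{\mathsf e\in\mathsf E}\int_0^{\ell_{\mathsf e}}u_{\mathsf e}''(x)\overline{v_{\mathsf e}''(x)}\,dx-\left(R{\bf u}^{0,1},{\bf v}^{0,1}\right)_{\mathbb C^{4E}}$$ with domain $D(\mathfrak a)=\widetilde H^2_Y(\mathcal G):=\{u\in\widetilde H^2(\mathcal G):{\bf u}^{0,1}\in Y\}$. Then the operator on $L^2(\mathcal G)$ associated with $\mathfrak a$ is $A_{Y,R}$, i.e. the edgewise fourth derivative $u\mapsto(u_{\mathsf e}'''')_{\mathsf e}$ with domain $D(A_{Y,R})=\{u\in\widetilde H^4(\mathcal G):{\bf u}^{0,1}\in Y,\ {\bf u}^{3,2}+R{\bf u}^{0,1}\in Y^\perp\}$.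
   Context: Let $\mathsf G=(\mathsf V,\mathsf E)$ be a finite connected graph without loops or multiple edges, $E=|\mathsf E|$. Fix an orientation; each edge $\mathsf e$ is identified with $[0,\ell_{\mathsf e}]$, $\ell_{\mathsf e}>0$, initial endpoint $\leftrightarrow0$, terminal endpoint $\leftrightarrow\ell_{\mathsf e}$, giving the network $\mathcal G$. $L^2(\mathcal G)=\bigoplus_{\mathsf e}L^2(0,\ell_{\mathsf e})$, $\widetilde H^k(\mathcal G)=\bigoplus_{\mathsf e}H^k(0,\ell_{\mathsf e})$. With $u(0)=(u_{\mathsf e}(0))_{\mathsf e}$, $u(\ell)=(u_{\mathsf e}(\ell_{\mathsf e}))_{\mathsf e}$ (similarly for derivatives), ${\bf u}^{0,1}=(u(0),u(\ell),-u'(0),u'(\ell))\in\mathbb C^{4E}$ and ${\bf u}^{3,2}=(-u'''(0),u'''(\ell),-u''(0),-u''(\ell))\in\mathbb C^{4E}$. The operator $S$ associated with a form $\mathfrak a$ is defined by $D(S)=\{u\in D(\mathfrak a):\exists v\in L^2(\mathcal G)\text{ with }\mathfrak a(u,h)=(v,h)_{L^2}\ \forall h\in D(\mathfrak a)\}$, $Su=v$. *)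

theory Defs
  imports "HOL-Analysis.Analysis"
begin

text \<open>Edges are indexed by 0..<E; edge e runs from vertex src e (identified with 0)
  to vertex tgt e (identified with len e). The graph is finite, connected, loop-free,
  without multiple edges.\<close>

definition network :: "'v set \<Rightarrow> (nat \<Rightarrow> 'v) \<Rightarrow> (nat \<Rightarrow> 'v) \<Rightarrow> nat \<Rightarrow> (nat \<Rightarrow> real) \<Rightarrow> bool" where
  "network V src tgt E len \<longleftrightarrow>
     finite V \<and> V \<noteq> {} \<and>
     (\<forall>e<E. src e \<in> V \<and> tgt e \<in> V \<and> src e \<noteq> tgt e \<and> len e > 0) \<and>
     (\<forall>e<E. \<forall>e'<E. e \<noteq> e' \<longrightarrow> {src e, tgt e} \<noteq> {src e', tgt e'}) \<and>
     (\<forall>v\<in>V. \<forall>w\<in>V. (v, w) \<in> ({(src e, tgt e) | e. e < E} \<union> {(tgt e, src e) | e. e < E})\<^sup>*)"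

definition L2_on :: "real set \<Rightarrow> (real \<Rightarrow> complex) \<Rightarrow> bool" where
  "L2_on S g \<longleftrightarrow> set_borel_measurable lebesgue S g \<and>
                  set_integrable lebesgue S (\<lambda>x. (cmod (g x))\<^sup>2)"

definition nderiv :: "real \<Rightarrow> nat \<Rightarrow> (real \<Rightarrow> complex) \<Rightarrow> real \<Rightarrow> complex" where
  "nderiv l j f = ((\<lambda>g x. vector_derivative g (at x within {0..l})) ^^ j) f"

text \<open>Sobolev space H^k(0,l), k \<ge> 1, via its standard one-dimensional description:
  for every j < k, the j-th derivative is (on [0,l]) an indefinite integral of a
  square-integrable function; i.e. f, ..., f^(k-1) are absolutely continuous and
  f^(k) (which exists a.e.) lies in L^2.  Elements are taken as their continuous
  representatives, so boundary values are well defined.\<close>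
definition Hk :: "nat \<Rightarrow> real \<Rightarrow> (real \<Rightarrow> complex) \<Rightarrow> bool" where
  "Hk k l f \<longleftrightarrow> (\<forall>j<k. \<exists>g. L2_on {0..l} g \<and>
       (\<forall>x\<in>{0..l}. nderiv l j f x = nderiv l j f 0 + (LINT t:{0..x}|lebesgue. g t)))"

definition L2G :: "nat \<Rightarrow> (nat \<Rightarrow> real) \<Rightarrow> (nat \<Rightarrow> real \<Rightarrow> complex) \<Rightarrow> bool" where
  "L2G E len u \<longleftrightarrow> (\<forall>e<E. L2_on {0..len e} (u e))"

definition L2inner :: "nat \<Rightarrow> (nat \<Rightarrow> real) \<Rightarrow> (nat \<Rightarrow> real \<Rightarrow> complex) \<Rightarrow> (nat \<Rightarrow> real \<Rightarrow> complex) \<Rightarrow> complex" where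
  "L2inner E len u v = (\<Sum>e<E. LINT x:{0..len e}|lebesgue. u e x * cnj (v e x))"

definition HkG :: "nat \<Rightarrow> nat \<Rightarrow> (nat \<Rightarrow> real) \<Rightarrow> (nat \<Rightarrow> real \<Rightarrow> complex) \<Rightarrow> bool" where
  "HkG k E len u \<longleftrightarrow> (\<forall>e<E. Hk k (len e) (u e))"

text \<open>Vectors of C^n are functions nat \<Rightarrow> complex vanishing at indices \<ge> n.\<close>
definition cvecs :: "nat \<Rightarrow> (nat \<Rightarrow> complex) set" where
  "cvecs n = {y. \<forall>i\<ge>n. y i = 0}"

definition cinner :: "nat \<Rightarrow> (nat \<Rightarrow> complex) \<Rightarrow> (nat \<Rightarrow> complex) \<Rightarrow> complex" where
  "cinner n a b = (\<Sum>i<n. a i * cnj (b i))"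

definition csubspace :: "nat \<Rightarrow> (nat \<Rightarrow> complex) set \<Rightarrow> bool" where
  "csubspace n Y \<longleftrightarrow> Y \<subseteq> cvecs n \<and> (\<lambda>i. 0) \<in> Y \<and>
     (\<forall>x\<in>Y. \<forall>y\<in>Y. (\<lambda>i. x i + y i) \<in> Y) \<and> (\<forall>c. \<forall>y\<in>Y. (\<lambda>i. c * y i) \<in> Y)"

definition clinear_on :: "(nat \<Rightarrow> complex) set \<Rightarrow> ((nat \<Rightarrow> complex) \<Rightarrow> (nat \<Rightarrow> complex)) \<Rightarrow> bool" where
  "clinear_on Y R \<longleftrightarrow> (\<forall>y\<in>Y. R y \<in> Y) \<and>
     (\<forall>x\<in>Y. \<forall>y\<in>Y. R (\<lambda>i. x i + y i) = (\<lambda>i. R x i + R y i)) \<and>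
     (\<forall>c. \<forall>y\<in>Y. R (\<lambda>i. c * y i) = (\<lambda>i. c * R y i))"

definition cperp :: "nat \<Rightarrow> (nat \<Rightarrow> complex) set \<Rightarrow> (nat \<Rightarrow> complex) set" where
  "cperp n Y = {w \<in> cvecs n. \<forall>y\<in>Y. cinner n w y = 0}"

definition bv01 :: "nat \<Rightarrow> (nat \<Rightarrow> real) \<Rightarrow> (nat \<Rightarrow> real \<Rightarrow> complex) \<Rightarrow> nat \<Rightarrow> complex" where
  "bv01 E len u i =
     (if i < E then u i 0
      else if i < 2*E then u (i-E) (len (i-E))
      else if i < 3*E then - nderiv (len (i-2*E)) 1 (u (i-2*E)) 0
      else if i < 4*E then nderiv (len (i-3*E)) 1 (u (i-3*E)) (len (i-3*E))
      else 0)"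

definition bv32 :: "nat \<Rightarrow> (nat \<Rightarrow> real) \<Rightarrow> (nat \<Rightarrow> real \<Rightarrow> complex) \<Rightarrow> nat \<Rightarrow> complex" where
  "bv32 E len u i =
     (if i < E then - nderiv (len i) 3 (u i) 0
      else if i < 2*E then nderiv (len (i-E)) 3 (u (i-E)) (len (i-E))
      else if i < 3*E then - nderiv (len (i-2*E)) 2 (u (i-2*E)) 0
      else if i < 4*E then - nderiv (len (i-3*E)) 2 (u (i-3*E)) (len (i-3*E))
      else 0)"

definition form_dom :: "nat \<Rightarrow> (nat \<Rightarrow> real) \<Rightarrow> (nat \<Rightarrow> complex) set \<Rightarrow> (nat \<Rightarrow> real \<Rightarrow> complex) set" where
  "form_dom E len Y = {u. HkG 2 E len u \<and> bv01 E len u \<in> Y}"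

definition form_a :: "nat \<Rightarrow> (nat \<Rightarrow> real) \<Rightarrow> ((nat \<Rightarrow> complex) \<Rightarrow> (nat \<Rightarrow> complex))
     \<Rightarrow> (nat \<Rightarrow> real \<Rightarrow> complex) \<Rightarrow> (nat \<Rightarrow> real \<Rightarrow> complex) \<Rightarrow> complex" where
  "form_a E len R u v =
     (\<Sum>e<E. LINT x:{0..len e}|lebesgue.
          nderiv (len e) 2 (u e) x * cnj (nderiv (len e) 2 (v e) x))
     - cinner (4*E) (R (bv01 E len u)) (bv01 E len v)"

definition assoc_op :: "nat \<Rightarrow> (nat \<Rightarrow> real) \<Rightarrow> (nat \<Rightarrow> real \<Rightarrow> complex) set
     \<Rightarrow> ((nat \<Rightarrow> real \<Rightarrow> complex) \<Rightarrow> (nat \<Rightarrow> real \<Rightarrow> complex) \<Rightarrow> complex)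
     \<Rightarrow> (nat \<Rightarrow> real \<Rightarrow> complex) \<Rightarrow> (nat \<Rightarrow> real \<Rightarrow> complex) \<Rightarrow> bool" where
  "assoc_op E len D a u v \<longleftrightarrow> u \<in> D \<and> L2G E len v \<and> (\<forall>h\<in>D. a u h = L2inner E len v h)"

definition A_dom :: "nat \<Rightarrow> (nat \<Rightarrow> real) \<Rightarrow> (nat \<Rightarrow> complex) set \<Rightarrow> ((nat \<Rightarrow> complex) \<Rightarrow> (nat \<Rightarrow> complex))
     \<Rightarrow> (nat \<Rightarrow> real \<Rightarrow> complex) set" where
  "A_dom E len Y R = {u. HkG 4 E len u \<and> bv01 E len u \<in> Y \<and>
      (\<lambda>i. bv32 E len u i + R (bv01 E len u) i) \<in> cperp (4*E) Y}"

definition A_op :: "nat \<Rightarrow> (nat \<Rightarrow> real) \<Rightarrow> (nat \<Rightarrow> complex) set \<Rightarrow> ((nat \<Rightarrow> complex) \<Rightarrow> (nat \<Rightarrow> complex))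
     \<Rightarrow> (nat \<Rightarrow> real \<Rightarrow> complex) \<Rightarrow> (nat \<Rightarrow> real \<Rightarrow> complex) \<Rightarrow> bool" where
  "A_op E len Y R u v \<longleftrightarrow> u \<in> A_dom E len Y R \<and> L2G E len v \<and>
     (\<forall>e<E. AE x in lebesgue. x \<in> {0..len e} \<longrightarrow> v e x = nderiv (len e) 4 (u e) x)"

end

theory Submission
  imports Defs
begin

lemma abs_cont_int:
  fixes g :: "real \<Rightarrow> real"
  assumes gi: "set_integrable lebesgue S g" and e: "e > 0"
  obtains \<eta> where "\<eta> > 0" "\<And>T. T \<in> lmeasurable \<Longrightarrow> T \<subseteq> S \<Longrightarrow> measure lebesgue T < \<eta> \<Longrightarrow> (LINT x:T|lebesgue. \<bar>g x\<bar>) < e"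
proof -
  define w where "w = (\<lambda>x. indicator S x * \<bar>g x\<bar>)"
  define s where "s = (\<lambda>n::nat. \<lambda>x. max 0 (w x - real n))"
  have wi: "integrable lebesgue w" using set_integrable_norm[OF gi] by (simp add: set_integrable_def w_def)
  have wm: "w \<in> borel_measurable lebesgue" using wi by auto
  have w0: "w x \<ge> 0" for x by (simp add: w_def)
  have sm: "s n \<in> borel_measurable lebesgue" for n unfolding s_def using wm by measurable
  have si: "integrable lebesgue (s n)" for n
    by (rule Bochner_Integration.integrable_bound[OF wi sm]) (auto simp: s_def w0)
  have "(\<lambda>n. integral\<^sup>L lebesgue (s n)) \<longlonglongrightarrow> integral\<^sup>L lebesgue (\<lambda>x::real. 0::real)"
  proof (rule integral_dominated_convergence[of "\<lambda>x. 0" lebesgue s w])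
    show "AE x in lebesgue. (\<lambda>i. s i x) \<longlonglongrightarrow> 0"
    proof (rule AE_I2)
      fix x
      have "eventually (\<lambda>n. s n x = 0) sequentially"
        unfolding eventually_sequentially
      proof (intro exI allI impI)
        fix n assume "n \<ge> nat \<lceil>w x\<rceil>"
        then have "real n \<ge> real (nat \<lceil>w x\<rceil>)" by simp
        moreover have "w x \<le> real (nat \<lceil>w x\<rceil>)" by (rule real_nat_ceiling_ge)
        ultimately show "s n x = 0" by (simp add: s_def)
      qed
      then show "(\<lambda>i. s i x) \<longlonglongrightarrow> 0" by (rule tendsto_eventually)
    qed
    show "AE x in lebesgue. norm (s i x) \<le> w x" for i by (auto simp: s_def w0)
  qed (use wi sm in auto)
  then have "(\<lambda>n. integral\<^sup>L lebesgue (s n)) \<longlonglongrightarrow> 0" by simp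
  then have "eventually (\<lambda>n. integral\<^sup>L lebesgue (s n) < e/2) sequentially"
    using e by (intro order_tendstoD) auto
  then obtain n where n: "integral\<^sup>L lebesgue (s n) < e/2"
    by (auto simp: eventually_sequentially)
  define \<eta> where "\<eta> = e / (2 * (real n + 1))"
  show ?thesis
  proof (rule that)
    show "\<eta> > 0" using e by (simp add: \<eta>_def)
    fix T assume T: "T \<in> lmeasurable" "T \<subseteq> S" "measure lebesgue T < \<eta>"
    have gT: "set_integrable lebesgue T g" using set_integrable_subset[OF gi] T by auto
    have l: "integrable lebesgue (\<lambda>x. indicator T x * \<bar>g x\<bar>)"
      using set_integrable_norm[OF gT] by (simp add: set_integrable_def)
    have iT: "integrable lebesgue (\<lambda>x. indicator T x * real n)"
      using T by (intro integrable_mult_left integrable_real_indicator) (auto simp: fmeasurable_def less_top)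
    have "(LINT x:T|lebesgue. \<bar>g x\<bar>) = integral\<^sup>L lebesgue (\<lambda>x. indicator T x * \<bar>g x\<bar>)"
      by (simp add: set_lebesgue_integral_def)
    also have "\<dots> \<le> integral\<^sup>L lebesgue (\<lambda>x. indicator T x * real n + s n x)"
    proof (rule integral_mono)
      show "integrable lebesgue (\<lambda>x. indicator T x * real n + s n x)" using iT si by auto
      fix x show "indicator T x * \<bar>g x\<bar> \<le> indicator T x * real n + s n x"
        using T(2) by (auto simp: s_def w_def indicator_def)
    qed (rule l)
    also have "\<dots> = measure lebesgue T * real n + integral\<^sup>L lebesgue (s n)"
      using iT si T by (simp add: Bochner_Integration.integral_add)
    also have "\<dots> < \<eta> * real n + e/2"
      using T(3) n by (intro add_le_less_mono mult_right_mono) auto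
    also have "\<eta> * real n \<le> e/2"
      using e by (simp add: \<eta>_def field_simps)
    finally show "(LINT x:T|lebesgue. \<bar>g x\<bar>) < e" by simp
  qed
qed

lemma CL:
  fixes g :: "real \<Rightarrow> real"
  assumes gi: "set_integrable lebesgue {a..b} g" and ss: "s < s'"
  shows "negligible {x \<in> {a<..<b}. g x < s \<and> (\<forall>\<delta>>0. \<exists>c d. c \<le> x \<and> x \<le> d \<and> c < d \<and> d - c < \<delta> \<and> s' * (d - c) < (LINT t:{c..d}|lebesgue. g t))}"
    (is "negligible ?E")
proof -
  define A where "A = {x \<in> {a<..<b}. g x < s}"
  have gm: "(\<lambda>x. indicator {a..b} x * g x) \<in> borel_measurable lebesgue"
    using gi by (simp add: set_integrable_def borel_measurable_integrable)
  have "A = {a<..<b} \<inter> {x \<in> space lebesgue. indicator {a..b} x * g x < s}"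
    by (auto simp: A_def indicator_def)
  moreover have "{x \<in> space lebesgue. indicator {a..b} x * g x < s} \<in> sets lebesgue"
    using gm unfolding borel_measurable_iff_less by blast
  ultimately have Am: "A \<in> sets lebesgue" by auto
  have EA: "?E \<subseteq> A" by (auto simp: A_def)
  show ?thesis unfolding negligible_outer_le
  proof (intro allI impI)
    fix \<epsilon> :: real assume \<epsilon>: "\<epsilon> > 0"
    define e1 where "e1 = \<epsilon> * (s' - s) / 2"
    have e1: "e1 > 0" using \<epsilon> ss by (simp add: e1_def)
    obtain \<eta> where \<eta>: "\<eta> > 0" "\<And>T. T \<in> lmeasurable \<Longrightarrow> T \<subseteq> {a..b} \<Longrightarrow> measure lebesgue T < \<eta> \<Longrightarrow> (LINT x:T|lebesgue. \<bar>g x\<bar>) < e1"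
      using abs_cont_int[OF gi e1] by blast
    define \<eta>' where "\<eta>' = min \<eta> (e1 / (\<bar>s'\<bar> + 1))"
    have \<eta>': "\<eta>' > 0" using \<eta> e1 by (simp add: \<eta>'_def)
    obtain O0 where O0: "open O0" "A \<subseteq> O0" "O0 - A \<in> lmeasurable" "emeasure lebesgue (O0 - A) < ennreal \<eta>'"
      using sets_lebesgue_outer_open[OF Am \<eta>'] by blast
    have mOA: "measure lebesgue (O0 - A) < \<eta>'"
      using O0(3,4) \<eta>' by (simp add: emeasure_eq_measure2 ennreal_less_iff)
    define Op where "Op = O0 \<inter> {a<..<b}"
    have Oo: "open Op" using O0 by (auto simp: Op_def)
    have AO: "A \<subseteq> Op" using O0 by (auto simp: Op_def A_def)
    have Oab: "Op \<subseteq> {a..b}" by (auto simp: Op_def)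
    define K where "K = {(c,d). c < d \<and> {c..d} \<subseteq> Op \<and> s' * (d - c) < (LINT t:{c..d}|lebesgue. g t)}"
    define cen :: "real \<times> real \<Rightarrow> real" where "cen = (\<lambda>(c,d). (c+d)/2)"
    define rad :: "real \<times> real \<Rightarrow> real" where "rad = (\<lambda>(c,d). (d-c)/2)"
    define I :: "real \<times> real \<Rightarrow> real set" where "I = (\<lambda>(c,d). {c..d})"
    have cbI: "cball (cen i) (rad i) = I i" for i
      by (cases i) (auto simp: cen_def rad_def I_def cball_eq_atLeastAtMost field_simps)
    obtain C where C: "countable C" "C \<subseteq> K" "pairwise (\<lambda>i j. disjnt (cball (cen i) (rad i)) (cball (cen j) (rad j))) C" "negligible (?E - (\<Union>i\<in>C. cball (cen i) (rad i)))"
    proof (rule Vitali_covering_theorem_cballs[of K rad ?E cen])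
      show "\<And>i. i \<in> K \<Longrightarrow> 0 < rad i" by (auto simp: K_def rad_def)
    next
      fix x \<delta> :: real assume x: "x \<in> ?E" and \<delta>: "0 < \<delta>"
      then have "x \<in> Op" using EA AO by auto
      then obtain \<rho> where \<rho>: "\<rho> > 0" "ball x \<rho> \<subseteq> Op" using Oo open_contains_ball by blast
      have "min \<delta> \<rho> > 0" using \<delta> \<rho> by simp
      with x obtain c d where cd: "c \<le> x" "x \<le> d" "c < d" "d - c < min \<delta> \<rho>" "s' * (d - c) < (LINT t:{c..d}|lebesgue. g t)"
        by blast
      have "{c..d} \<subseteq> ball x \<rho>" using cd by (auto simp: dist_real_def)
      then have "(c,d) \<in> K" using cd \<rho> by (auto simp: K_def)
      moreover have "x \<in> cball (cen (c,d)) (rad (c,d))" using cbI[of "(c,d)"] cd by (simp add: I_def)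
      moreover have "rad (c,d) < \<delta>" using cd by (simp add: rad_def)
      ultimately show "\<exists>i. i \<in> K \<and> x \<in> cball (cen i) (rad i) \<and> rad i < \<delta>" by blast
    qed (blast intro: that)
    have CK: "fst i < snd i \<and> I i \<subseteq> Op \<and> s' * (snd i - fst i) < (LINT t:I i|lebesgue. g t)" if "i \<in> C" for i
      using C(2) that by (auto simp: K_def I_def)
    have disj: "pairwise (\<lambda>i j. disjnt (I i) (I j)) C" using C(3) by (simp add: cbI)
    have Ifm: "I i \<in> lmeasurable" for i by (auto simp: I_def split: prod.splits)
    have Im: "I i \<in> sets lebesgue" for i using Ifm[of i] by auto
    have IAfm: "I i \<inter> A \<in> fmeasurable lebesgue" for i
      using fmeasurable_Int_fmeasurable[OF Ifm Am] .
    have key: "measure lebesgue (\<Union>i\<in>F. I i \<inter> A) \<le> \<epsilon>" if F: "F \<subseteq> C" "finite F" for F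
    proof -
      define U where "U = (\<Union>i\<in>F. I i)"
      have UO: "U \<subseteq> Op" using CK F by (auto simp: U_def)
      have Ufm: "U \<in> lmeasurable" unfolding U_def using F(2) Ifm by (intro fmeasurable.finite_UN) auto
      have Um: "U \<in> sets lebesgue" using Ufm by auto
      have gU: "set_integrable lebesgue U g" by (rule set_integrable_subset[OF gi Um]) (use UO Oab in auto)
      have gI: "set_integrable lebesgue (I i) g" if "i \<in> F" for i
        by (rule set_integrable_subset[OF gi Im]) (use CK[of i] F that Oab in blast)
      have s1: "(LINT t:U|lebesgue. g t) = (\<Sum>i\<in>F. LINT t:I i|lebesgue. g t)"
        unfolding U_def
      proof (rule set_integral_finite_UN_AE)
        show "AE x in lebesgue. x \<in> I i \<and> x \<in> I j \<longrightarrow> i = j" if "i \<in> F" "j \<in> F" for i j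
          using disj F that unfolding pairwise_def disjnt_def by (intro AE_I2) blast
      qed (use F Im gI in auto)
      have s2: "measure lebesgue U = (\<Sum>i\<in>F. measure lebesgue (I i))"
        unfolding U_def
        by (rule measure_UNION') (use F Ifm pairwise_subset[OF disj F(1)] in auto)
      have mI: "measure lebesgue (I i) = snd i - fst i" if "i \<in> F" for i
        using CK[of i] F that by (cases i) (auto simp: I_def)
      have "s' * measure lebesgue U = (\<Sum>i\<in>F. s' * (snd i - fst i))"
        by (simp add: s2 mI sum_distrib_left)
      also have "\<dots> \<le> (\<Sum>i\<in>F. LINT t:I i|lebesgue. g t)"
        by (rule sum_mono) (use CK F in \<open>auto intro: less_imp_le\<close>)
      finally have s3: "s' * measure lebesgue U \<le> (LINT t:U|lebesgue. g t)" by (simp add: s1)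
      have UAm: "U \<inter> A \<in> lmeasurable" using Ufm Am by (rule fmeasurable_Int_fmeasurable)
      have UAm': "U - A \<in> lmeasurable" using Ufm Am by (intro fmeasurable_Diff) auto
      have UAs: "U \<inter> A \<in> sets lebesgue" "U - A \<in> sets lebesgue" using UAm UAm' by (auto intro: fmeasurableD)
      have s4: "(LINT t:U|lebesgue. g t) = (LINT t:U \<inter> A|lebesgue. g t) + (LINT t:U - A|lebesgue. g t)"
      proof -
        have "U = (U \<inter> A) \<union> (U - A)" by auto
        then have "(LINT t:U|lebesgue. g t) = (LINT t:(U \<inter> A) \<union> (U - A)|lebesgue. g t)" by simp
        also have "\<dots> = (LINT t:U \<inter> A|lebesgue. g t) + (LINT t:U - A|lebesgue. g t)"
          by (rule set_integral_Un) (auto intro!: set_integrable_subset[OF gU] simp: UAs)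
        finally show ?thesis .
      qed
      have cI: "set_integrable lebesgue (U \<inter> A) (\<lambda>t. s)"
        using UAm unfolding set_integrable_def
        by (intro integrable_scaleR_left integrable_real_indicator) (auto simp: fmeasurable_def less_top)
      have "(LINT t:U \<inter> A|lebesgue. g t) \<le> (LINT t:U \<inter> A|lebesgue. s)"
      proof (rule set_integral_mono)
        show "set_integrable lebesgue (U \<inter> A) g" using UAs by (auto intro!: set_integrable_subset[OF gU])
        show "set_integrable lebesgue (U \<inter> A) (\<lambda>t. s)" by (rule cI)
        fix x assume "x \<in> U \<inter> A" then show "g x \<le> s" by (auto simp: A_def)
      qed
      also have "\<dots> = measure lebesgue (U \<inter> A) * s"
        using UAm by (subst set_integral_const) (auto simp: fmeasurable_def)
      finally have s5: "(LINT t:U \<inter> A|lebesgue. g t) \<le> measure lebesgue (U \<inter> A) * s" .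
      have mUA: "measure lebesgue (U - A) \<le> measure lebesgue (O0 - A)"
        by (rule measure_mono_fmeasurable) (use UO O0 UAm' in \<open>auto simp: Op_def\<close>)
      have gUA: "set_integrable lebesgue (U - A) g" using UAs by (auto intro!: set_integrable_subset[OF gU])
      have "(LINT t:U - A|lebesgue. g t) \<le> (LINT t:U - A|lebesgue. \<bar>g t\<bar>)"
        by (rule set_integral_mono) (use gUA set_integrable_abs[OF gUA] in auto)
      also have "\<dots> < e1"
        by (rule \<eta>(2)) (use UAm' UO Oab mUA mOA in \<open>auto simp: \<eta>'_def\<close>)
      finally have s6: "(LINT t:U - A|lebesgue. g t) < e1" .
      have s7: "measure lebesgue U = measure lebesgue (U \<inter> A) + measure lebesgue (U - A)"
      proof -
        have "U = (U \<inter> A) \<union> (U - A)" by auto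
        then have "measure lebesgue U = measure lebesgue ((U \<inter> A) \<union> (U - A))" by simp
        also have "\<dots> = measure lebesgue (U \<inter> A) + measure lebesgue (U - A)"
          by (rule measure_Union) (use UAm UAm' in \<open>auto simp: fmeasurable_def less_top\<close>)
        finally show ?thesis .
      qed
      define m1 where "m1 = measure lebesgue (U \<inter> A)"
      define m2 where "m2 = measure lebesgue (U - A)"
      have m2: "m2 \<ge> 0" "m2 \<le> e1 / (\<bar>s'\<bar> + 1)" using mUA mOA by (auto simp: m2_def \<eta>'_def)
      have "(\<bar>s'\<bar> + 1) * m2 \<le> e1" using m2 by (simp add: field_simps)
      then have m2': "- s' * m2 \<le> e1" using m2(1)
        by (smt (verit, ccfv_SIG) mult_nonneg_nonneg abs_ge_minus_self distrib_right mult_right_mono)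
      have "s' * (m1 + m2) \<le> m1 * s + e1" using s3 s4 s5 s6 s7 by (simp add: m1_def m2_def)
      then have "(s' - s) * m1 \<le> 2 * e1" using m2' by (simp add: algebra_simps)
      then have "(s' - s) * m1 \<le> (s' - s) * \<epsilon>" by (simp add: e1_def mult.commute)
      then have "m1 \<le> \<epsilon>" using ss by simp
      moreover have "(\<Union>i\<in>F. I i \<inter> A) = U \<inter> A" by (auto simp: U_def)
      ultimately show ?thesis by (simp add: m1_def)
    qed
    have fmC: "(\<Union>i\<in>C. I i \<inter> A) \<in> fmeasurable lebesgue"
      by (rule fmeasurable_UN_bound[OF C(1) IAfm key]) auto
    have mC: "measure lebesgue (\<Union>i\<in>C. I i \<inter> A) \<le> \<epsilon>"
      by (rule measure_UN_bound[OF C(1) IAfm key]) auto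
    define N where "N = ?E - (\<Union>i\<in>C. cball (cen i) (rad i))"
    have Nn: "negligible N" using C(4) by (simp add: N_def)
    define T where "T = N \<union> (\<Union>i\<in>C. I i \<inter> A)"
    have "?E \<subseteq> T" using EA by (auto simp: T_def N_def cbI)
    moreover have Tm: "T \<in> lmeasurable" unfolding T_def
      using negligible_imp_measurable[OF Nn] fmC by (rule fmeasurable.Un)
    moreover have "measure lebesgue T \<le> \<epsilon>"
    proof -
      have "measure lebesgue T \<le> measure lebesgue N + measure lebesgue (\<Union>i\<in>C. I i \<inter> A)"
        unfolding T_def by (rule measure_Un_le) (use negligible_imp_measurable[OF Nn] fmC in auto)
      then show ?thesis using negligible_imp_measure0[OF Nn] mC by simp
    qed
    ultimately show "\<exists>T. ?E \<subseteq> T \<and> T \<in> lmeasurable \<and> measure lebesgue T \<le> \<epsilon>" by blast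
  qed
qed

lemma LINT_uminus_real: "(LINT t:S|lebesgue. - (g t::real)) = - (LINT t:S|lebesgue. g t)"
  by (simp add: set_lebesgue_integral_def)

lemma LDT_real:
  fixes g :: "real \<Rightarrow> real"
  assumes gi: "set_integrable lebesgue {a..b} g"
  shows "AE x in lebesgue. x \<in> {a<..<b} \<longrightarrow> (\<forall>e>0. \<exists>\<delta>>0. \<forall>c d. c \<le> x \<longrightarrow> x \<le> d \<longrightarrow> c < d \<longrightarrow> d - c < \<delta> \<longrightarrow> \<bar>(LINT t:{c..d}|lebesgue. g t) - g x * (d - c)\<bar> \<le> e * (d - c))"
proof -
  define E where "E = (\<lambda>(h::real \<Rightarrow> real) (s::real) (s'::real). {x \<in> {a<..<b}. h x < s \<and> (\<forall>\<delta>>0. \<exists>c d. c \<le> x \<and> x \<le> d \<and> c < d \<and> d - c < \<delta> \<and> s' * (d - c) < (LINT t:{c..d}|lebesgue. h t))})"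
  define P :: "(real \<times> real) set" where "P = {p \<in> \<rat> \<times> \<rat>. fst p < snd p}"
  define N where "N = (\<Union>p\<in>P. E g (fst p) (snd p) \<union> E (\<lambda>x. - g x) (fst p) (snd p))"
  have gi': "set_integrable lebesgue {a..b} (\<lambda>x. - g x)"
    using gi by (simp add: set_integrable_def)
  have cP: "countable P" unfolding P_def
    by (rule countable_subset[of _ "\<rat> \<times> \<rat>"]) (auto intro: countable_SIGMA countable_rat)
  have "negligible N" unfolding N_def
  proof (rule negligible_countable_Union)
    show "countable ((\<lambda>p. E g (fst p) (snd p) \<union> E (\<lambda>x. - g x) (fst p) (snd p)) ` P)" using cP by simp
    fix S assume "S \<in> (\<lambda>p. E g (fst p) (snd p) \<union> E (\<lambda>x. - g x) (fst p) (snd p)) ` P"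
    then obtain p where p: "p \<in> P" "S = E g (fst p) (snd p) \<union> E (\<lambda>x. - g x) (fst p) (snd p)" by blast
    have "fst p < snd p" using p by (simp add: P_def)
    then show "negligible S" unfolding p(2) E_def
      using CL[OF gi, of "fst p" "snd p"] CL[OF gi', of "fst p" "snd p"] by (simp add: negligible_Un)
  qed
  then have "AE x in lebesgue. x \<notin> N" by (simp add: negligible_iff_null_sets AE_not_in)
  then show ?thesis
  proof (rule AE_mp, intro AE_I2 impI allI)
    fix x e :: real assume xN: "x \<notin> N" and x: "x \<in> {a<..<b}" and e: "e > 0"
    obtain s where s: "s \<in> \<rat>" "g x < s" "s < g x + e" using Rats_dense_in_real[of "g x" "g x + e"] e by auto
    obtain s' where s': "s' \<in> \<rat>" "s < s'" "s' < g x + e" using Rats_dense_in_real[of s "g x + e"] s by auto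
    obtain r where r: "r \<in> \<rat>" "- g x < r" "r < - g x + e" using Rats_dense_in_real[of "- g x" "- g x + e"] e by auto
    obtain r' where r': "r' \<in> \<rat>" "r < r'" "r' < - g x + e" using Rats_dense_in_real[of r "- g x + e"] r by auto
    have "(s, s') \<in> P" using s s' by (simp add: P_def)
    then have "x \<notin> E g s s'" using xN by (auto simp: N_def)
    then have "\<not> (\<forall>\<delta>>0. \<exists>c d. c \<le> x \<and> x \<le> d \<and> c < d \<and> d - c < \<delta> \<and> s' * (d - c) < (LINT t:{c..d}|lebesgue. g t))"
      using x s(2) unfolding E_def by simp
    then obtain \<delta>1 where \<delta>1': "\<delta>1 > 0" "\<not> (\<exists>c d. c \<le> x \<and> x \<le> d \<and> c < d \<and> d - c < \<delta>1 \<and> s' * (d - c) < (LINT t:{c..d}|lebesgue. g t))"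
      by blast
    have \<delta>1: "\<delta>1 > 0" "\<And>c d. c \<le> x \<Longrightarrow> x \<le> d \<Longrightarrow> c < d \<Longrightarrow> d - c < \<delta>1 \<Longrightarrow> (LINT t:{c..d}|lebesgue. g t) \<le> s' * (d - c)"
      using \<delta>1' by (blast, meson not_less)
    have "(r, r') \<in> P" using r r' by (simp add: P_def)
    then have "x \<notin> E (\<lambda>x. - g x) r r'" using xN by (auto simp: N_def)
    then have "\<not> (\<forall>\<delta>>0. \<exists>c d. c \<le> x \<and> x \<le> d \<and> c < d \<and> d - c < \<delta> \<and> r' * (d - c) < (LINT t:{c..d}|lebesgue. - g t))"
      using x r(2) unfolding E_def by simp
    then obtain \<delta>2 where \<delta>2': "\<delta>2 > 0" "\<not> (\<exists>c d. c \<le> x \<and> x \<le> d \<and> c < d \<and> d - c < \<delta>2 \<and> r' * (d - c) < (LINT t:{c..d}|lebesgue. - g t))"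
      by blast
    have \<delta>2: "\<delta>2 > 0" "\<And>c d. c \<le> x \<Longrightarrow> x \<le> d \<Longrightarrow> c < d \<Longrightarrow> d - c < \<delta>2 \<Longrightarrow> (LINT t:{c..d}|lebesgue. - g t) \<le> r' * (d - c)"
      using \<delta>2' by (blast, meson not_less)
    show "\<exists>\<delta>>0. \<forall>c d. c \<le> x \<longrightarrow> x \<le> d \<longrightarrow> c < d \<longrightarrow> d - c < \<delta> \<longrightarrow> \<bar>(LINT t:{c..d}|lebesgue. g t) - g x * (d - c)\<bar> \<le> e * (d - c)"
    proof (intro exI[of _ "min \<delta>1 \<delta>2"] conjI allI impI)
      show "min \<delta>1 \<delta>2 > 0" using \<delta>1 \<delta>2 by simp
      fix c d assume cd: "c \<le> x" "x \<le> d" "c < d" "d - c < min \<delta>1 \<delta>2"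
      have 1: "(LINT t:{c..d}|lebesgue. g t) \<le> s' * (d - c)" using \<delta>1(2)[OF cd(1-3)] cd(4) by simp
      have 2: "- (LINT t:{c..d}|lebesgue. g t) \<le> r' * (d - c)" using \<delta>2(2)[OF cd(1-3)] cd(4) by (simp add: LINT_uminus_real)
      have 3: "s' * (d - c) \<le> (g x + e) * (d - c)" using s' cd by (intro mult_right_mono) auto
      have 4: "r' * (d - c) \<le> (- g x + e) * (d - c)" using r' cd by (intro mult_right_mono) auto
      show "\<bar>(LINT t:{c..d}|lebesgue. g t) - g x * (d - c)\<bar> \<le> e * (d - c)"
        using 1 2 3 4 by (simp add: algebra_simps abs_le_iff)
    qed
  qed
qed

lemma LINT_combine:
  fixes g :: "real \<Rightarrow> 'b::euclidean_space"
  assumes gi: "set_integrable lebesgue {a..b} g" and "a \<le> c" "c \<le> b"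
  shows "(LINT t:{a..b}|lebesgue. g t) = (LINT t:{a..c}|lebesgue. g t) + (LINT t:{c..b}|lebesgue. g t)"
proof -
  have 1: "set_integrable lebesgue {a..c} g" "set_integrable lebesgue {c..b} g"
    using assms by (auto intro: set_integrable_subset[OF gi])
  show ?thesis
    using set_lebesgue_integral_eq_integral(2)[OF gi] set_lebesgue_integral_eq_integral(2)[OF 1(1)]
      set_lebesgue_integral_eq_integral(2)[OF 1(2)] Henstock_Kurzweil_Integration.integral_combine[OF assms(2,3) set_lebesgue_integral_eq_integral(1)[OF gi]]
    by simp
qed

lemma set_integrable_Re_Im:
  fixes g :: "real \<Rightarrow> complex"
  assumes "set_integrable lebesgue S g"
  shows "set_integrable lebesgue S (\<lambda>x. Re (g x))" "set_integrable lebesgue S (\<lambda>x. Im (g x))"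
  using integrable_Re[OF assms[unfolded set_integrable_def]] integrable_Im[OF assms[unfolded set_integrable_def]]
  by (simp_all add: set_integrable_def)

lemma LINT_Re_Im:
  fixes g :: "real \<Rightarrow> complex"
  assumes "set_integrable lebesgue S g"
  shows "Re (LINT t:S|lebesgue. g t) = (LINT t:S|lebesgue. Re (g t))"
    "Im (LINT t:S|lebesgue. g t) = (LINT t:S|lebesgue. Im (g t))"
  using integral_Re[OF assms[unfolded set_integrable_def]] integral_Im[OF assms[unfolded set_integrable_def]]
  by (simp_all add: set_lebesgue_integral_def)

lemma LDT_complex:
  fixes g :: "real \<Rightarrow> complex"
  assumes gi: "set_integrable lebesgue {a..b} g"
  shows "AE x in lebesgue. x \<in> {a<..<b} \<longrightarrow> (\<forall>e>0. \<exists>\<delta>>0. \<forall>c d. c \<le> x \<longrightarrow> x \<le> d \<longrightarrow> c < d \<longrightarrow> d - c < \<delta> \<longrightarrow> {c..d} \<subseteq> {a..b} \<longrightarrow> cmod ((LINT t:{c..d}|lebesgue. g t) - g x * of_real (d - c)) \<le> e * (d - c))"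
  using LDT_real[OF set_integrable_Re_Im(1)[OF gi]] LDT_real[OF set_integrable_Re_Im(2)[OF gi]]
proof (eventually_elim, intro impI allI)
  fix x e :: real
  assume R: "x \<in> {a<..<b} \<longrightarrow> (\<forall>e>0. \<exists>\<delta>>0. \<forall>c d. c \<le> x \<longrightarrow> x \<le> d \<longrightarrow> c < d \<longrightarrow> d - c < \<delta> \<longrightarrow> \<bar>(LINT t:{c..d}|lebesgue. Re (g t)) - Re (g x) * (d - c)\<bar> \<le> e * (d - c))"
    and I: "x \<in> {a<..<b} \<longrightarrow> (\<forall>e>0. \<exists>\<delta>>0. \<forall>c d. c \<le> x \<longrightarrow> x \<le> d \<longrightarrow> c < d \<longrightarrow> d - c < \<delta> \<longrightarrow> \<bar>(LINT t:{c..d}|lebesgue. Im (g t)) - Im (g x) * (d - c)\<bar> \<le> e * (d - c))"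
    and x: "x \<in> {a<..<b}" and e: "e > 0"
  have e2: "e/2 > 0" using e by simp
  obtain \<delta>1 where \<delta>1: "\<delta>1 > 0" "\<And>c d. c \<le> x \<Longrightarrow> x \<le> d \<Longrightarrow> c < d \<Longrightarrow> d - c < \<delta>1 \<Longrightarrow> \<bar>(LINT t:{c..d}|lebesgue. Re (g t)) - Re (g x) * (d - c)\<bar> \<le> e/2 * (d - c)"
  proof -
    from R x e2 have "\<exists>\<delta>>0. \<forall>c d. c \<le> x \<longrightarrow> x \<le> d \<longrightarrow> c < d \<longrightarrow> d - c < \<delta> \<longrightarrow> \<bar>(LINT t:{c..d}|lebesgue. Re (g t)) - Re (g x) * (d - c)\<bar> \<le> e/2 * (d - c)" by blast
    then show ?thesis using that by blast
  qed
  obtain \<delta>2 where \<delta>2: "\<delta>2 > 0" "\<And>c d. c \<le> x \<Longrightarrow> x \<le> d \<Longrightarrow> c < d \<Longrightarrow> d - c < \<delta>2 \<Longrightarrow> \<bar>(LINT t:{c..d}|lebesgue. Im (g t)) - Im (g x) * (d - c)\<bar> \<le> e/2 * (d - c)"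
  proof -
    from I x e2 have "\<exists>\<delta>>0. \<forall>c d. c \<le> x \<longrightarrow> x \<le> d \<longrightarrow> c < d \<longrightarrow> d - c < \<delta> \<longrightarrow> \<bar>(LINT t:{c..d}|lebesgue. Im (g t)) - Im (g x) * (d - c)\<bar> \<le> e/2 * (d - c)" by blast
    then show ?thesis using that by blast
  qed
  show "\<exists>\<delta>>0. \<forall>c d. c \<le> x \<longrightarrow> x \<le> d \<longrightarrow> c < d \<longrightarrow> d - c < \<delta> \<longrightarrow> {c..d} \<subseteq> {a..b} \<longrightarrow> cmod ((LINT t:{c..d}|lebesgue. g t) - g x * of_real (d - c)) \<le> e * (d - c)"
  proof (intro exI[of _ "min \<delta>1 \<delta>2"] conjI allI impI)
    show "min \<delta>1 \<delta>2 > 0" using \<delta>1 \<delta>2 by simp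
    fix c d assume cd: "c \<le> x" "x \<le> d" "c < d" "d - c < min \<delta>1 \<delta>2" "{c..d} \<subseteq> {a..b}"
    have gcd: "set_integrable lebesgue {c..d} g" using cd(5) by (auto intro: set_integrable_subset[OF gi])
    define z where "z = (LINT t:{c..d}|lebesgue. g t) - g x * of_real (d - c)"
    have "Re z = (LINT t:{c..d}|lebesgue. Re (g t)) - Re (g x) * (d - c)"
      by (simp add: z_def LINT_Re_Im[OF gcd])
    moreover have "Im z = (LINT t:{c..d}|lebesgue. Im (g t)) - Im (g x) * (d - c)"
      by (simp add: z_def LINT_Re_Im[OF gcd])
    ultimately have "\<bar>Re z\<bar> \<le> e/2 * (d - c)" "\<bar>Im z\<bar> \<le> e/2 * (d - c)"
      using \<delta>1(2)[OF cd(1-3)] \<delta>2(2)[OF cd(1-3)] cd(4) by auto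
    then show "cmod z \<le> e * (d - c)" using cmod_le[of z] by linarith
  qed
qed

lemma LDT_deriv:
  fixes g :: "real \<Rightarrow> complex"
  assumes gi: "set_integrable lebesgue {a..b} g"
    and F: "\<And>x. x \<in> {a..b} \<Longrightarrow> F x = F a + (LINT t:{a..x}|lebesgue. g t)"
  shows "AE x in lebesgue. x \<in> {a<..<b} \<longrightarrow> (F has_vector_derivative g x) (at x)"
  using LDT_complex[OF gi]
proof (eventually_elim, intro impI)
  fix x assume P: "x \<in> {a<..<b} \<longrightarrow> (\<forall>e>0. \<exists>\<delta>>0. \<forall>c d. c \<le> x \<longrightarrow> x \<le> d \<longrightarrow> c < d \<longrightarrow> d - c < \<delta> \<longrightarrow> {c..d} \<subseteq> {a..b} \<longrightarrow> cmod ((LINT t:{c..d}|lebesgue. g t) - g x * of_real (d - c)) \<le> e * (d - c))"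
    and x: "x \<in> {a<..<b}"
  have diff: "F y - F x = (LINT t:{x..y}|lebesgue. g t)" if "y \<in> {a..b}" "x \<le> y" for y
  proof -
    have "(LINT t:{a..y}|lebesgue. g t) = (LINT t:{a..x}|lebesgue. g t) + (LINT t:{x..y}|lebesgue. g t)"
      by (rule LINT_combine) (use that x in \<open>auto intro: set_integrable_subset[OF gi]\<close>)
    then show ?thesis using F[of x] F[of y] that x by simp
  qed
  show "(F has_vector_derivative g x) (at x)"
    unfolding has_vector_derivative_def has_derivative_at_alt
  proof (intro conjI allI impI)
    show "bounded_linear (\<lambda>h. h *\<^sub>R g x)" by (rule bounded_linear_scaleR_left)
    fix e :: real assume e: "e > 0"
    then obtain \<delta> where \<delta>: "\<delta> > 0" "\<And>c d. c \<le> x \<Longrightarrow> x \<le> d \<Longrightarrow> c < d \<Longrightarrow> d - c < \<delta> \<Longrightarrow> {c..d} \<subseteq> {a..b} \<Longrightarrow> cmod ((LINT t:{c..d}|lebesgue. g t) - g x * of_real (d - c)) \<le> e * (d - c)"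
    proof -
      from P x e have "\<exists>\<delta>>0. \<forall>c d. c \<le> x \<longrightarrow> x \<le> d \<longrightarrow> c < d \<longrightarrow> d - c < \<delta> \<longrightarrow> {c..d} \<subseteq> {a..b} \<longrightarrow> cmod ((LINT t:{c..d}|lebesgue. g t) - g x * of_real (d - c)) \<le> e * (d - c)" by blast
      then show ?thesis using that by blast
    qed
    show "\<exists>d>0. \<forall>y. norm (y - x) < d \<longrightarrow> norm (F y - F x - (y - x) *\<^sub>R g x) \<le> e * norm (y - x)"
    proof (intro exI[of _ "min \<delta> (min (x - a) (b - x))"] conjI allI impI)
      show "min \<delta> (min (x - a) (b - x)) > 0" using \<delta> x by simp
      fix y assume y: "norm (y - x) < min \<delta> (min (x - a) (b - x))"
      then have yab: "y \<in> {a..b}" by (auto simp: dist_real_def)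
      consider "y = x" | "x < y" | "y < x" by linarith
      then show "norm (F y - F x - (y - x) *\<^sub>R g x) \<le> e * norm (y - x)"
      proof cases
        case 1 then show ?thesis by simp
      next
        case 2
        have "norm (F y - F x - (y - x) *\<^sub>R g x) = cmod ((LINT t:{x..y}|lebesgue. g t) - g x * of_real (y - x))"
          using diff[OF yab] 2 by (simp add: scaleR_conv_of_real mult.commute)
        also have "\<dots> \<le> e * (y - x)"
          by (rule \<delta>(2)) (use 2 y x yab in auto)
        finally show ?thesis using 2 by simp
      next
        case 3
        have "F x - F y = (LINT t:{y..x}|lebesgue. g t)"
        proof -
          have "(LINT t:{a..x}|lebesgue. g t) = (LINT t:{a..y}|lebesgue. g t) + (LINT t:{y..x}|lebesgue. g t)"
            by (rule LINT_combine) (use 3 x yab in \<open>auto intro: set_integrable_subset[OF gi]\<close>)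
          then show ?thesis using F[of x] F[of y] yab x by simp
        qed
        then have "norm (F y - F x - (y - x) *\<^sub>R g x) = cmod ((LINT t:{y..x}|lebesgue. g t) - g x * of_real (x - y))"
        proof -
          have "F y - F x - (y - x) *\<^sub>R g x = - ((LINT t:{y..x}|lebesgue. g t) - g x * of_real (x - y))"
            using \<open>F x - F y = _\<close> by (simp add: scaleR_conv_of_real algebra_simps)
          then show ?thesis by (simp only: norm_minus_cancel)
        qed
        also have "\<dots> \<le> e * (x - y)"
          by (rule \<delta>(2)) (use 3 y x yab in auto)
        finally show ?thesis using 3 by simp
      qed
    qed
  qed
qed

lemma nderiv_0[simp]: "nderiv l 0 f = f" by (simp add: nderiv_def)

lemma nderiv_Suc: "nderiv l (Suc j) f = (\<lambda>x. vector_derivative (nderiv l j f) (at x within {0..l}))"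
  by (simp add: nderiv_def)

lemma vd_unique:
  assumes "0 < l" "x \<in> {0..l}" "(F has_vector_derivative D) (at x within {0..l})"
  shows "vector_derivative F (at x within {0..l}) = D"
  using vector_derivative_within_cbox[of 0 l x F D] assms by simp

lemma vd_cong:
  assumes "\<And>y. y \<in> {0..l} \<Longrightarrow> F y = G y" "x \<in> {0..l}"
  shows "vector_derivative F (at x within {0..l}) = vector_derivative G (at x within {0..l})"
proof -
  have "(F has_vector_derivative D) (at x within {0..l}) \<longleftrightarrow> (G has_vector_derivative D) (at x within {0..l})" for D
    using has_vector_derivative_transform[of x "{0..l}" G F D] has_vector_derivative_transform[of x "{0..l}" F G D] assms
    by auto
  then show ?thesis unfolding vector_derivative_def by simp
qed

lemma nderiv_cong:
  assumes "\<And>y. y \<in> {0..l} \<Longrightarrow> f y = g y"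
  shows "x \<in> {0..l} \<Longrightarrow> nderiv l j f x = nderiv l j g x"
proof (induction j arbitrary: x)
  case 0 then show ?case using assms by simp
next
  case (Suc j) then show ?case unfolding nderiv_Suc by (intro vd_cong) auto
qed

lemma lebesgue_measurable_AE:
  fixes f g :: "'a::euclidean_space \<Rightarrow> 'b::topological_space"
  assumes "f \<in> borel_measurable lebesgue" "AE x in lebesgue. f x = g x"
  shows "g \<in> borel_measurable lebesgue"
proof (rule borel_measurableI)
  fix S :: "'b set" assume "open S"
  have "f -` S \<inter> space lebesgue \<in> sets lebesgue"
    by (rule measurable_sets[OF assms(1)]) (simp add: borel_open \<open>open S\<close>)
  then show "g -` S \<inter> space lebesgue \<in> sets lebesgue"
    by (rule completion.in_sets_AE[rotated]) (use assms(2) in auto)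
qed

lemma le_one_plus_sq: "(t::real) \<ge> 0 \<Longrightarrow> t \<le> 1 + t\<^sup>2"
proof -
  assume t: "t \<ge> 0"
  have "0 \<le> (t - 1)\<^sup>2" by simp
  then have "2 * t \<le> 1 + t\<^sup>2" by (simp add: power2_eq_square algebra_simps)
  then show ?thesis using t by linarith
qed

lemma L2_integrable:
  assumes L: "L2_on {a..b} g"
  shows "set_integrable lebesgue {a..b} g"
proof -
  have m: "(\<lambda>x. indicator {a..b} x *\<^sub>R g x) \<in> borel_measurable lebesgue"
    using L by (simp add: L2_on_def set_borel_measurable_def)
  have i2: "integrable lebesgue (\<lambda>x. indicator {a..b} x *\<^sub>R (cmod (g x))\<^sup>2)"
    using L by (simp add: L2_on_def set_integrable_def)
  have i1: "integrable lebesgue (\<lambda>x. indicator {a..b} x *\<^sub>R (1::real))"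
    by (intro integrable_scaleR_left integrable_real_indicator) (auto simp: emeasure_lborel_Icc_eq)
  show ?thesis unfolding set_integrable_def
  proof (rule Bochner_Integration.integrable_bound[OF Bochner_Integration.integrable_add[OF i1 i2] m], intro AE_I2)
    fix x
    show "norm (indicator {a..b} x *\<^sub>R g x) \<le> norm (indicator {a..b} x *\<^sub>R 1 + indicator {a..b} x *\<^sub>R (cmod (g x))\<^sup>2)"
      using le_one_plus_sq[of "cmod (g x)"] by (auto simp: indicator_def)
  qed
qed

lemma L2_AE:
  assumes L: "L2_on S g" and S: "S \<in> sets lebesgue" and ae: "AE x in lebesgue. x \<in> S \<longrightarrow> g x = h x"
  shows "L2_on S h"
proof -
  have m: "(\<lambda>x. indicator S x *\<^sub>R g x) \<in> borel_measurable lebesgue"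
    using L by (simp add: L2_on_def set_borel_measurable_def)
  have i2: "integrable lebesgue (\<lambda>x. indicator S x *\<^sub>R (cmod (g x))\<^sup>2)"
    using L by (simp add: L2_on_def set_integrable_def)
  have ae1: "AE x in lebesgue. indicator S x *\<^sub>R g x = indicator S x *\<^sub>R h x"
    using ae by eventually_elim (auto simp: indicator_def)
  have ae2: "AE x in lebesgue. indicator S x *\<^sub>R (cmod (g x))\<^sup>2 = indicator S x *\<^sub>R (cmod (h x))\<^sup>2"
    using ae by eventually_elim (auto simp: indicator_def)
  have mh: "(\<lambda>x. indicator S x *\<^sub>R h x) \<in> borel_measurable lebesgue"
    by (rule lebesgue_measurable_AE[OF m ae1])
  have m2h: "(\<lambda>x. indicator S x *\<^sub>R (cmod (h x))\<^sup>2) \<in> borel_measurable lebesgue"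
    by (rule lebesgue_measurable_AE[OF borel_measurable_integrable[OF i2] ae2])
  have "integrable lebesgue (\<lambda>x. indicator S x *\<^sub>R (cmod (h x))\<^sup>2)"
    using integrable_cong_AE[OF borel_measurable_integrable[OF i2] m2h ae2] i2 by simp
  then show ?thesis using mh by (simp add: L2_on_def set_borel_measurable_def set_integrable_def)
qed

lemma LINT_cong_AE:
  fixes g h :: "real \<Rightarrow> 'b::{banach, second_countable_topology}"
  assumes mg: "set_borel_measurable lebesgue S g" and mh: "set_borel_measurable lebesgue S h"
    and S: "S \<in> sets lebesgue" and T: "T \<in> sets lebesgue" "T \<subseteq> S"
    and ae: "AE x in lebesgue. x \<in> S \<longrightarrow> g x = h x"
  shows "(LINT t:T|lebesgue. g t) = (LINT t:T|lebesgue. h t)"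
proof -
  have m1: "set_borel_measurable lebesgue T g" by (rule set_borel_measurable_subset[OF mg T])
  have m2: "set_borel_measurable lebesgue T h" by (rule set_borel_measurable_subset[OF mh T])
  show ?thesis unfolding set_lebesgue_integral_def
    by (rule integral_cong_AE) (use m1 m2 ae T in \<open>auto simp: set_borel_measurable_def indicator_def elim!: eventually_mono\<close>)
qed

lemma AE_not_in_finite: "finite (A::real set) \<Longrightarrow> AE x in lebesgue. x \<notin> A"
  by (simp add: AE_not_in negligible_finite flip: negligible_iff_null_sets)

lemma AC_deriv_ae:
  fixes g :: "real \<Rightarrow> complex"
  assumes l: "0 < l" and gi: "set_integrable lebesgue {0..l} g"
    and F: "\<And>x. x \<in> {0..l} \<Longrightarrow> F x = F 0 + (LINT t:{0..x}|lebesgue. g t)"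
  shows "AE x in lebesgue. x \<in> {0..l} \<longrightarrow> vector_derivative F (at x within {0..l}) = g x"
proof -
  have "AE x in lebesgue. x \<in> {0<..<l} \<longrightarrow> (F has_vector_derivative g x) (at x)"
    by (rule LDT_deriv[OF gi F])
  moreover have "AE x in lebesgue. x \<notin> {0, l}" by (rule AE_not_in_finite) simp
  ultimately show ?thesis
  proof eventually_elim
    case (elim x)
    show ?case
    proof
      assume x: "x \<in> {0..l}"
      then have "x \<in> {0<..<l}" using elim(2) by auto
      then have "(F has_vector_derivative g x) (at x)" using elim(1) by blast
      then show "vector_derivative F (at x within {0..l}) = g x"
        by (rule vd_unique[OF l x has_vector_derivative_at_within])
    qed
  qed
qed

lemma Hk_D:
  assumes H: "Hk k l f" and l: "0 < l" and j: "j < k"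
  shows "L2_on {0..l} (nderiv l (Suc j) f)"
    "\<And>x. x \<in> {0..l} \<Longrightarrow> nderiv l j f x = nderiv l j f 0 + (LINT t:{0..x}|lebesgue. nderiv l (Suc j) f t)"
proof -
  obtain g where g: "L2_on {0..l} g" "\<And>x. x \<in> {0..l} \<Longrightarrow> nderiv l j f x = nderiv l j f 0 + (LINT t:{0..x}|lebesgue. g t)"
    using H j unfolding Hk_def by blast
  have gi: "set_integrable lebesgue {0..l} g" by (rule L2_integrable[OF g(1)])
  have ae0: "AE x in lebesgue. x \<in> {0..l} \<longrightarrow> vector_derivative (nderiv l j f) (at x within {0..l}) = g x"
    by (rule AC_deriv_ae[OF l gi g(2)])
  have ae: "AE x in lebesgue. x \<in> {0..l} \<longrightarrow> g x = nderiv l (Suc j) f x"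
    using ae0 unfolding nderiv_Suc by (rule eventually_mono) simp
  have S: "{0..l} \<in> sets lebesgue" by simp
  show L: "L2_on {0..l} (nderiv l (Suc j) f)" by (rule L2_AE[OF g(1) S ae])
  fix x assume x: "x \<in> {0..l}"
  have m1: "set_borel_measurable lebesgue {0..l} g" using g(1) by (simp add: L2_on_def)
  have m2: "set_borel_measurable lebesgue {0..l} (nderiv l (Suc j) f)" using L by (simp add: L2_on_def)
  have sub: "{0..x} \<subseteq> {0..l}" using x by simp
  have "(LINT t:{0..x}|lebesgue. g t) = (LINT t:{0..x}|lebesgue. nderiv l (Suc j) f t)"
    by (rule LINT_cong_AE[OF m1 m2 S _ sub ae]) simp
  then show "nderiv l j f x = nderiv l j f 0 + (LINT t:{0..x}|lebesgue. nderiv l (Suc j) f t)"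
    using g(2)[OF x] by simp
qed

lemma L2_cont:
  assumes "continuous_on {a..b} g"
  shows "L2_on {a..b} g"
proof -
  have "set_integrable lebesgue {a..b} g" by (rule absolutely_integrable_continuous_real[OF assms])
  moreover have "set_integrable lebesgue {a..b} (\<lambda>x. (cmod (g x))\<^sup>2)"
    by (rule absolutely_integrable_continuous_real) (intro continuous_intros assms)
  ultimately show ?thesis
    by (auto simp: L2_on_def set_borel_measurable_def set_integrable_def)
qed

lemma LINT_eq_integral_cont:
  fixes g :: "real \<Rightarrow> 'b::euclidean_space"
  assumes "continuous_on {a..b} g" "{c..d} \<subseteq> {a..b}"
  shows "(LINT t:{c..d}|lebesgue. g t) = integral {c..d} g"
proof -
  have "continuous_on {c..d} g" using assms continuous_on_subset by blast
  then show ?thesis by (rule set_lebesgue_integral_eq_integral(2)[OF absolutely_integrable_continuous_real])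
qed

lemma FTC_cont:
  fixes g :: "real \<Rightarrow> 'b::euclidean_space"
  assumes g: "continuous_on {0..l} g" and F: "\<And>x. x \<in> {0..l} \<Longrightarrow> F x = c + (LINT t:{0..x}|lebesgue. g t)"
    and x: "x \<in> {0..l}"
  shows "(F has_vector_derivative g x) (at x within {0..l})"
proof -
  have "((\<lambda>u. c + integral {0..u} g) has_vector_derivative 0 + g x) (at x within {0..l})"
    by (rule has_vector_derivative_add[OF has_vector_derivative_const integral_has_vector_derivative[OF g x]])
  then have "((\<lambda>u. c + integral {0..u} g) has_vector_derivative g x) (at x within {0..l})" by simp
  moreover have "F y = c + integral {0..y} g" if "y \<in> {0..l}" for y
    using F[OF that] LINT_eq_integral_cont[OF g, of 0 y] that by simp
  ultimately show ?thesis
    by (rule has_vector_derivative_transform[OF x, rotated])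
qed

lemma FTC_C1:
  fixes F :: "real \<Rightarrow> 'b::euclidean_space"
  assumes d: "\<And>x. x \<in> {0..l} \<Longrightarrow> (F has_vector_derivative f x) (at x within {0..l})"
    and f: "continuous_on {0..l} f" and x: "x \<in> {0..l}"
  shows "F x = F 0 + (LINT t:{0..x}|lebesgue. f t)"
proof -
  have "(f has_integral F x - F 0) {0..x}"
  proof (rule fundamental_theorem_of_calculus)
    show "0 \<le> x" using x by simp
    fix y assume "y \<in> {0..x}"
    then show "(F has_vector_derivative f y) (at y within {0..x})"
      using d[of y] x by (auto intro: has_vector_derivative_within_subset)
  qed
  then have "integral {0..x} f = F x - F 0" by blast
  then show ?thesis using LINT_eq_integral_cont[OF f, of 0 x] x by simp
qed

lemma sf_leb: "sigma_finite_measure (lebesgue :: real measure)"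
  unfolding sigma_finite_measure_def
proof (intro exI[of _ "range (\<lambda>n::nat. {- real n..real n})"] conjI)
  show "\<Union> (range (\<lambda>n::nat. {- real n..real n})) = space lebesgue"
  proof (auto)
    fix x :: real
    show "\<exists>n. - real n \<le> x \<and> x \<le> real n"
      by (rule exI[of _ "nat \<lceil>\<bar>x\<bar>\<rceil>"]) linarith
  qed
qed (auto simp: emeasure_lborel_Icc_eq)

interpretation LL: pair_sigma_finite "lebesgue :: real measure" "lebesgue :: real measure"
  by (intro pair_sigma_finite.intro sf_leb)

lemma meas_id_leb[measurable]: "(\<lambda>x::real. x) \<in> borel_measurable lebesgue"
  by (rule measurable_completion) simp

lemma set_integrable_cont_mult:
  fixes f g :: "real \<Rightarrow> complex"
  assumes f: "continuous_on {a..b} f" and g: "set_integrable lebesgue {a..b} g"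
  shows "set_integrable lebesgue {a..b} (\<lambda>x. f x * g x)"
proof (rule absolutely_integrable_bounded_measurable_product[OF bilinear_times _ _ _ g])
  show "f \<in> borel_measurable (lebesgue_on {a..b})"
    by (rule continuous_imp_measurable_on_sets_lebesgue[OF f]) simp
  show "bounded (f ` {a..b})"
    by (rule compact_imp_bounded[OF compact_continuous_image[OF f]]) simp
qed simp

lemma IBP:
  fixes P p q Q :: "real \<Rightarrow> complex"
  assumes l: "0 \<le> l"
    and dP: "\<And>x. x \<in> {0..l} \<Longrightarrow> (P has_vector_derivative p x) (at x within {0..l})"
    and pc: "continuous_on {0..l} p"
    and qi: "set_integrable lebesgue {0..l} q"
    and Q: "\<And>x. x \<in> {0..l} \<Longrightarrow> Q x = Q 0 + (LINT t:{0..x}|lebesgue. q t)"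
  shows "(LINT x:{0..l}|lebesgue. P x * q x) + (LINT x:{0..l}|lebesgue. p x * Q x) = P l * Q l - P 0 * Q 0"
proof -
  have Pc: "continuous_on {0..l} P" by (rule continuous_on_vector_derivative) (rule dP)
  have Pint: "P x = P 0 + (LINT t:{0..x}|lebesgue. p t)" if "x \<in> {0..l}" for x by (rule FTC_C1[OF dP pc that])
  have Qc: "continuous_on {0..l} Q"
  proof -
    have "continuous_on {0..l} (\<lambda>x. Q 0 + integral {0..x} q)"
      by (intro continuous_intros indefinite_integral_continuous_1 set_lebesgue_integral_eq_integral(1)[OF qi])
    moreover have "Q 0 + integral {0..x} q = Q x" if "x \<in> {0..l}" for x
    proof -
      have "set_integrable lebesgue {0..x} q" by (rule set_integrable_subset[OF qi]) (use that in auto)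
      then show ?thesis using Q[OF that] set_lebesgue_integral_eq_integral(2) by metis
    qed
    ultimately show ?thesis by (rule continuous_on_eq)
  qed
  have pi: "set_integrable lebesgue {0..l} p" by (rule absolutely_integrable_continuous_real[OF pc])
  define pp where "pp = (\<lambda>t::real. indicator {0..l} t *\<^sub>R p t)"
  define qq where "qq = (\<lambda>x::real. indicator {0..l} x *\<^sub>R q x)"
  have ppi: "integrable lebesgue pp" using pi by (simp add: pp_def set_integrable_def)
  have qqi: "integrable lebesgue qq" using qi by (simp add: qq_def set_integrable_def)
  have ppm[measurable]: "pp \<in> borel_measurable lebesgue" using ppi by auto
  have qqm[measurable]: "qq \<in> borel_measurable lebesgue" using qqi by auto
  define f where "f = (\<lambda>x t::real. if t \<le> x then pp t * qq x else 0)"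
  define H where "H = (\<lambda>z::real\<times>real. cmod (qq (fst z)) * cmod (pp (snd z)))"
  have Hm: "H \<in> borel_measurable (lebesgue \<Otimes>\<^sub>M lebesgue)" unfolding H_def by measurable
  have Hi: "integrable (lebesgue \<Otimes>\<^sub>M lebesgue) H"
  proof (rule LL.Fubini_integrable[OF Hm])
    have "(\<lambda>x. LINT y|lebesgue. norm (H (x, y))) = (\<lambda>x. cmod (qq x) * (LINT y|lebesgue. cmod (pp y)))"
      by (simp add: H_def integral_mult_right_zero abs_mult)
    moreover have "integrable lebesgue (\<lambda>x. cmod (qq x) * (LINT y|lebesgue. cmod (pp y)))"
      by (intro integrable_mult_left integrable_norm qqi)
    ultimately show "integrable lebesgue (\<lambda>x. LINT y|lebesgue. norm (H (x, y)))" by simp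
    show "AE x in lebesgue. integrable lebesgue (\<lambda>y. H (x, y))"
      using integrable_norm[OF ppi] by (simp add: H_def)
  qed
  have fm: "(\<lambda>(x, y). f x y) \<in> borel_measurable (lebesgue \<Otimes>\<^sub>M lebesgue)" unfolding f_def by measurable
  have fi: "integrable (lebesgue \<Otimes>\<^sub>M lebesgue) (\<lambda>(x, y). f x y)"
  proof (rule Bochner_Integration.integrable_bound[OF Hi fm], intro AE_I2)
    fix z :: "real \<times> real"
    show "norm ((\<lambda>(x, y). f x y) z) \<le> norm (H z)"
      by (cases z) (auto simp: f_def H_def norm_mult)
  qed
  have fub: "(LINT y|lebesgue. LINT x|lebesgue. f x y) = (LINT x|lebesgue. LINT y|lebesgue. f x y)"
    using LL.Fubini_integral[OF fi] .
  have inner1: "(LINT y|lebesgue. f x y) = indicator {0..l} x *\<^sub>R (q x * (P x - P 0))" for x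
  proof (cases "x \<in> {0..l}")
    case True
    have eq: "(\<lambda>y. f x y) = (\<lambda>y. q x * (indicator {0..x} y *\<^sub>R p y))"
      using True by (auto simp: f_def pp_def qq_def indicator_def fun_eq_iff)
    have "(LINT y|lebesgue. f x y) = (LINT y|lebesgue. q x * (indicator {0..x} y *\<^sub>R p y))"
      by (simp only: eq)
    also have "\<dots> = q x * (LINT y|lebesgue. indicator {0..x} y *\<^sub>R p y)"
      by (rule integral_mult_right_zero)
    also have "\<dots> = q x * (LINT y:{0..x}|lebesgue. p y)" by (simp only: set_lebesgue_integral_def)
    also have "\<dots> = q x * (P x - P 0)" using Pint[OF True] by simp
    finally show ?thesis using True by simp
  next
    case False
    then have "qq x = 0" by (simp add: qq_def)
    then have "(\<lambda>y. f x y) = (\<lambda>y. 0)" by (simp add: f_def fun_eq_iff)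
    then show ?thesis using False by simp
  qed
  have inner2: "(LINT x|lebesgue. f x y) = indicator {0..l} y *\<^sub>R (p y * (Q l - Q y))" for y
  proof (cases "y \<in> {0..l}")
    case True
    have eq: "(\<lambda>x. f x y) = (\<lambda>x. p y * (indicator {y..l} x *\<^sub>R q x))"
      using True by (auto simp: f_def pp_def qq_def indicator_def fun_eq_iff)
    have "(LINT x|lebesgue. f x y) = (LINT x|lebesgue. p y * (indicator {y..l} x *\<^sub>R q x))"
      by (simp only: eq)
    also have "\<dots> = p y * (LINT x|lebesgue. indicator {y..l} x *\<^sub>R q x)"
      by (rule integral_mult_right_zero)
    also have "\<dots> = p y * (LINT x:{y..l}|lebesgue. q x)" by (simp only: set_lebesgue_integral_def)
    also have "(LINT x:{y..l}|lebesgue. q x) = Q l - Q y"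
    proof -
      have "(LINT t:{0..l}|lebesgue. q t) = (LINT t:{0..y}|lebesgue. q t) + (LINT t:{y..l}|lebesgue. q t)"
        by (rule LINT_combine[OF qi]) (use True in auto)
      moreover have "Q l = Q 0 + (LINT t:{0..l}|lebesgue. q t)" by (rule Q) (use l in auto)
      moreover have "Q y = Q 0 + (LINT t:{0..y}|lebesgue. q t)" by (rule Q[OF True])
      ultimately show ?thesis by simp
    qed
    finally show ?thesis using True by simp
  next
    case False
    then have "pp y = 0" by (simp add: pp_def)
    then have "(\<lambda>x. f x y) = (\<lambda>x. 0)" by (simp add: f_def fun_eq_iff)
    then show ?thesis using False by simp
  qed
  have key: "(LINT y:{0..l}|lebesgue. p y * (Q l - Q y)) = (LINT x:{0..l}|lebesgue. q x * (P x - P 0))"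
    using fub unfolding inner1 inner2 by (simp add: set_lebesgue_integral_def)
  have i1: "set_integrable lebesgue {0..l} (\<lambda>x. q x * (P x - P 0))"
    using set_integrable_cont_mult[of 0 l "\<lambda>x. P x - P 0" q] Pc qi
    by (simp add: continuous_on_diff continuous_on_const mult.commute)
  have i2: "set_integrable lebesgue {0..l} (\<lambda>y. p y * (Q l - Q y))"
    by (rule absolutely_integrable_continuous_real) (intro continuous_intros pc Qc)
  have i3: "set_integrable lebesgue {0..l} (\<lambda>x. P 0 * q x)" using qi by simp
  have i4: "set_integrable lebesgue {0..l} (\<lambda>x. Q l * p x)" using pi by simp
  have e1: "(LINT x:{0..l}|lebesgue. P x * q x) = (LINT x:{0..l}|lebesgue. q x * (P x - P 0)) + P 0 * (Q l - Q 0)"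
  proof -
    have "(LINT x:{0..l}|lebesgue. P x * q x) = (LINT x:{0..l}|lebesgue. q x * (P x - P 0) + P 0 * q x)"
      by (simp add: algebra_simps)
    also have "\<dots> = (LINT x:{0..l}|lebesgue. q x * (P x - P 0)) + (LINT x:{0..l}|lebesgue. P 0 * q x)"
      by (rule set_integral_add(2)[OF i1 i3])
    also have "(LINT x:{0..l}|lebesgue. P 0 * q x) = P 0 * (LINT x:{0..l}|lebesgue. q x)"
      by (rule set_integral_mult_right)
    also have "(LINT x:{0..l}|lebesgue. q x) = Q l - Q 0"
    proof -
      have "Q l = Q 0 + (LINT t:{0..l}|lebesgue. q t)" by (rule Q) (use l in auto)
      then show ?thesis by simp
    qed
    finally show ?thesis .
  qed
  have e2: "(LINT x:{0..l}|lebesgue. p x * Q x) = Q l * (P l - P 0) - (LINT y:{0..l}|lebesgue. p y * (Q l - Q y))"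
  proof -
    have "(LINT x:{0..l}|lebesgue. p x * Q x) = (LINT x:{0..l}|lebesgue. Q l * p x - p x * (Q l - Q x))"
      by (simp add: algebra_simps)
    also have "\<dots> = (LINT x:{0..l}|lebesgue. Q l * p x) - (LINT x:{0..l}|lebesgue. p x * (Q l - Q x))"
      by (rule set_integral_diff(2)[OF i4 i2])
    also have "(LINT x:{0..l}|lebesgue. Q l * p x) = Q l * (LINT x:{0..l}|lebesgue. p x)"
      by (rule set_integral_mult_right)
    also have "(LINT x:{0..l}|lebesgue. p x) = P l - P 0"
    proof -
      have "P l = P 0 + (LINT t:{0..l}|lebesgue. p t)" by (rule Pint) (use l in auto)
      then show ?thesis by simp
    qed
    finally show ?thesis .
  qed
  show ?thesis unfolding e1 e2 key by (simp add: algebra_simps)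
qed

lemma AC_cont:
  fixes g :: "real \<Rightarrow> 'b::euclidean_space"
  assumes gi: "set_integrable lebesgue {0..l} g" and F: "\<And>x. x \<in> {0..l} \<Longrightarrow> F x = c + (LINT t:{0..x}|lebesgue. g t)"
  shows "continuous_on {0..l} F"
proof -
  have "continuous_on {0..l} (\<lambda>x. c + integral {0..x} g)"
    by (intro continuous_intros indefinite_integral_continuous_1 set_lebesgue_integral_eq_integral(1)[OF gi])
  moreover have "c + integral {0..x} g = F x" if "x \<in> {0..l}" for x
  proof -
    have "set_integrable lebesgue {0..x} g" by (rule set_integrable_subset[OF gi]) (use that in auto)
    then show ?thesis using F[OF that] set_lebesgue_integral_eq_integral(2) by metis
  qed
  ultimately show ?thesis by (rule continuous_on_eq)
qed

lemma Hk_cont: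
  assumes H: "Hk k l f" and l: "0 < l" and j: "j < k"
  shows "continuous_on {0..l} (nderiv l j f)"
  by (rule AC_cont[OF L2_integrable[OF Hk_D(1)[OF H l j]] Hk_D(2)[OF H l j]])

lemma Hk_deriv:
  assumes H: "Hk k l f" and l: "0 < l" and j: "Suc j < k" and x: "x \<in> {0..l}"
  shows "(nderiv l j f has_vector_derivative nderiv l (Suc j) f x) (at x within {0..l})"
  by (rule FTC_cont[OF Hk_cont[OF H l j] Hk_D(2)[OF H l Suc_lessD[OF j]] x])

lemma Hk_mono: "Hk k l f \<Longrightarrow> m \<le> k \<Longrightarrow> Hk m l f"
  unfolding Hk_def by (meson order_less_le_trans)

lemma integrable_cnj':
  fixes f :: "_ \<Rightarrow> complex"
  assumes i: "integrable M f" shows "integrable M (\<lambda>x. cnj (f x))"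
  by (rule integrable.intros[OF has_bochner_integral_cnj[OF has_bochner_integral_integrable[OF i]]])

lemma set_integrable_cnj:
  fixes g :: "real \<Rightarrow> complex"
  assumes "set_integrable lebesgue S g" shows "set_integrable lebesgue S (\<lambda>x. cnj (g x))"
  using integrable_cnj'[OF assms[unfolded set_integrable_def]] by (simp add: set_integrable_def)

lemma LINT_cnj:
  fixes g :: "real \<Rightarrow> complex"
  shows "(LINT t:S|lebesgue. cnj (g t)) = cnj (LINT t:S|lebesgue. g t)"
  unfolding set_lebesgue_integral_def using Bochner_Integration.integral_cnj[of lebesgue "\<lambda>t. indicator S t *\<^sub>R g t"] by simp

lemma green_edge:
  fixes u h :: "real \<Rightarrow> complex"
  assumes l: "0 < l" and Hu: "Hk 4 l u" and Hh: "Hk 2 l h"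
  shows "(LINT x:{0..l}|lebesgue. nderiv l 2 u x * cnj (nderiv l 2 h x)) =
         (LINT x:{0..l}|lebesgue. nderiv l 4 u x * cnj (h x))
         + nderiv l 2 u l * cnj (nderiv l 1 h l) - nderiv l 2 u 0 * cnj (nderiv l 1 h 0)
         - nderiv l 3 u l * cnj (h l) + nderiv l 3 u 0 * cnj (h 0)"
proof -
  have l0: "0 \<le> l" using l by simp
  have I1: "(LINT x:{0..l}|lebesgue. nderiv l 2 u x * cnj (nderiv l 2 h x)) + (LINT x:{0..l}|lebesgue. nderiv l 3 u x * cnj (nderiv l 1 h x))
      = nderiv l 2 u l * cnj (nderiv l 1 h l) - nderiv l 2 u 0 * cnj (nderiv l 1 h 0)"
  proof (rule IBP[OF l0])
    show "(nderiv l 2 u has_vector_derivative nderiv l 3 u x) (at x within {0..l})" if "x \<in> {0..l}" for x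
      using Hk_deriv[OF Hu l _ that, of 2] by (simp add: numeral_eq_Suc)
    show "continuous_on {0..l} (nderiv l 3 u)" by (rule Hk_cont[OF Hu l]) simp
    have "L2_on {0..l} (nderiv l (Suc 1) h)" by (rule Hk_D(1)[OF Hh l]) simp
    then show "set_integrable lebesgue {0..l} (\<lambda>x. cnj (nderiv l 2 h x))"
      by (intro set_integrable_cnj L2_integrable) (simp add: numeral_eq_Suc)
    fix x assume x: "x \<in> {0..l}"
    have "nderiv l 1 h x = nderiv l 1 h 0 + (LINT t:{0..x}|lebesgue. nderiv l (Suc 1) h t)"
      by (rule Hk_D(2)[OF Hh l _ x]) simp
    then show "cnj (nderiv l 1 h x) = cnj (nderiv l 1 h 0) + (LINT t:{0..x}|lebesgue. cnj (nderiv l 2 h t))"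
      by (simp add: LINT_cnj numeral_eq_Suc)
  qed
  have I2: "(LINT x:{0..l}|lebesgue. cnj (h x) * nderiv l 4 u x) + (LINT x:{0..l}|lebesgue. cnj (nderiv l 1 h x) * nderiv l 3 u x)
      = cnj (h l) * nderiv l 3 u l - cnj (h 0) * nderiv l 3 u 0"
  proof (rule IBP[OF l0])
    show "((\<lambda>x. cnj (h x)) has_vector_derivative cnj (nderiv l 1 h x)) (at x within {0..l})" if "x \<in> {0..l}" for x
      using has_vector_derivative_cnj[OF Hk_deriv[OF Hh l _ that, of 0]] by simp
    show "continuous_on {0..l} (\<lambda>x. cnj (nderiv l 1 h x))"
      by (intro continuous_on_cnj Hk_cont[OF Hh l]) simp
    have "L2_on {0..l} (nderiv l (Suc 3) u)" by (rule Hk_D(1)[OF Hu l]) simp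
    then show "set_integrable lebesgue {0..l} (nderiv l 4 u)"
      by (intro L2_integrable) (simp add: numeral_eq_Suc)
    fix x assume x: "x \<in> {0..l}"
    have "nderiv l 3 u x = nderiv l 3 u 0 + (LINT t:{0..x}|lebesgue. nderiv l (Suc 3) u t)"
      by (rule Hk_D(2)[OF Hu l _ x]) simp
    then show "nderiv l 3 u x = nderiv l 3 u 0 + (LINT t:{0..x}|lebesgue. nderiv l 4 u t)"
      by (simp add: numeral_eq_Suc)
  qed
  have c1: "(LINT x:{0..l}|lebesgue. cnj (h x) * nderiv l 4 u x) = (LINT x:{0..l}|lebesgue. nderiv l 4 u x * cnj (h x))"
    by (simp add: mult.commute)
  have c2: "(LINT x:{0..l}|lebesgue. cnj (nderiv l 1 h x) * nderiv l 3 u x) = (LINT x:{0..l}|lebesgue. nderiv l 3 u x * cnj (nderiv l 1 h x))"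
    by (simp add: mult.commute)
  define A where "A = (LINT x:{0..l}|lebesgue. nderiv l 2 u x * cnj (nderiv l 2 h x))"
  define B where "B = (LINT x:{0..l}|lebesgue. nderiv l 3 u x * cnj (nderiv l 1 h x))"
  define C where "C = (LINT x:{0..l}|lebesgue. nderiv l 4 u x * cnj (h x))"
  have 1: "A = (nderiv l 2 u l * cnj (nderiv l 1 h l) - nderiv l 2 u 0 * cnj (nderiv l 1 h 0)) - B"
    using I1 unfolding A_def B_def by (simp add: eq_diff_eq)
  have 2: "B = (cnj (h l) * nderiv l 3 u l - cnj (h 0) * nderiv l 3 u 0) - C"
    using I2 unfolding c1 c2 B_def C_def by (simp add: eq_diff_eq add.commute)
  show ?thesis unfolding A_def[symmetric] C_def[symmetric] 1 2 by (simp add: algebra_simps)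
qed

lemma sum_add_split: "(\<Sum>i<a+b. (F::nat \<Rightarrow> 'a::comm_monoid_add) i) = (\<Sum>i<a. F i) + (\<Sum>i<b. F (a+i))"
  by (induction b) (simp_all add: add.assoc)

lemma sum_split4: "(\<Sum>i<4*E. (F::nat \<Rightarrow> 'a::comm_monoid_add) i) = (\<Sum>e<E. F e + F (E+e) + F (2*E+e) + F (3*E+e))"
proof -
  have "(\<Sum>i<4*E. F i) = (\<Sum>i<E + (E + (E + E)). F i)"
    by (rule arg_cong[where f="\<lambda>n. \<Sum>i<n. F i"]) simp
  also have "\<dots> = (\<Sum>i<E. F i) + ((\<Sum>i<E. F (E+i)) + ((\<Sum>i<E. F (E+(E+i))) + (\<Sum>i<E. F (E+(E+(E+i))))))"
    by (simp only: sum_add_split)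
  also have "\<dots> = (\<Sum>e<E. F e + F (E+e) + F (2*E+e) + F (3*E+e))"
  proof -
    have eqs: "\<And>e. 2*E+e = E+(E+e)" "\<And>e. 3*E+e = E+(E+(E+e))" by simp_all
    show ?thesis by (simp only: eqs sum.distrib add.assoc)
  qed
  finally show ?thesis .
qed

lemma green_global:
  assumes lpos: "\<And>e. e < E \<Longrightarrow> 0 < len e" and Hu: "HkG 4 E len u" and Hh: "HkG 2 E len h"
  shows "(\<Sum>e<E. LINT x:{0..len e}|lebesgue. nderiv (len e) 2 (u e) x * cnj (nderiv (len e) 2 (h e) x))
        = (\<Sum>e<E. LINT x:{0..len e}|lebesgue. nderiv (len e) 4 (u e) x * cnj (h e x)) - cinner (4*E) (bv32 E len u) (bv01 E len h)"
proof -
  define C where "C = (\<lambda>e. LINT x:{0..len e}|lebesgue. nderiv (len e) 4 (u e) x * cnj (h e x))"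
  define K where "K = (\<lambda>e. - (nderiv (len e) 2 (u e) (len e) * cnj (nderiv (len e) 1 (h e) (len e)))
      + nderiv (len e) 2 (u e) 0 * cnj (nderiv (len e) 1 (h e) 0)
      + nderiv (len e) 3 (u e) (len e) * cnj (h e (len e)) - nderiv (len e) 3 (u e) 0 * cnj (h e 0))"
  have "(\<Sum>e<E. LINT x:{0..len e}|lebesgue. nderiv (len e) 2 (u e) x * cnj (nderiv (len e) 2 (h e) x)) = (\<Sum>e<E. C e - K e)"
  proof (rule sum.cong[OF refl])
    fix e assume "e \<in> {..<E}"
    then have e: "e < E" by simp
    show "(LINT x:{0..len e}|lebesgue. nderiv (len e) 2 (u e) x * cnj (nderiv (len e) 2 (h e) x)) = C e - K e"
      using green_edge[OF lpos[OF e] Hu[unfolded HkG_def, rule_format, OF e] Hh[unfolded HkG_def, rule_format, OF e]]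
      unfolding C_def K_def by (simp add: algebra_simps)
  qed
  also have "\<dots> = (\<Sum>e<E. C e) - (\<Sum>e<E. K e)" by (rule sum_subtractf)
  also have "(\<Sum>e<E. K e) = cinner (4*E) (bv32 E len u) (bv01 E len h)"
    unfolding cinner_def sum_split4
  proof (rule sum.cong[OF refl])
    fix e assume "e \<in> {..<E}"
    then have e: "e < E" by simp
    show "K e = bv32 E len u e * cnj (bv01 E len h e) + bv32 E len u (E + e) * cnj (bv01 E len h (E + e)) +
          bv32 E len u (2 * E + e) * cnj (bv01 E len h (2 * E + e)) + bv32 E len u (3 * E + e) * cnj (bv01 E len h (3 * E + e))"
      using e by (simp add: K_def bv32_def bv01_def algebra_simps)
  qed
  finally show ?thesis by (simp add: C_def)
qed

lemma nderiv_num: "nderiv l 1 f = nderiv l (Suc 0) f" "nderiv l 2 f = nderiv l (Suc 1) f"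
  "nderiv l 3 f = nderiv l (Suc 2) f" "nderiv l 4 f = nderiv l (Suc 3) f"
  by (simp_all add: numeral_eq_Suc)

lemma nderiv_C2:
  assumes l: "0 < l"
    and d0: "\<And>x. x \<in> {0..l} \<Longrightarrow> (F0 has_vector_derivative F1 x) (at x within {0..l})"
    and d1: "\<And>x. x \<in> {0..l} \<Longrightarrow> (F1 has_vector_derivative F2 x) (at x within {0..l})"
    and x: "x \<in> {0..l}"
  shows "nderiv l 1 F0 x = F1 x" "nderiv l 2 F0 x = F2 x"
proof -
  have n1: "nderiv l 1 F0 y = F1 y" if "y \<in> {0..l}" for y
    using vd_unique[OF l that d0[OF that]] by (simp add: nderiv_num nderiv_Suc)
  then show "nderiv l 1 F0 x = F1 x" using x by blast
  have "nderiv l 2 F0 x = vector_derivative (nderiv l 1 F0) (at x within {0..l})"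
    by (simp only: nderiv_num(2) nderiv_Suc)
  also have "\<dots> = vector_derivative F1 (at x within {0..l})" by (rule vd_cong[OF n1 x])
  also have "\<dots> = F2 x" by (rule vd_unique[OF l x d1[OF x]])
  finally show "nderiv l 2 F0 x = F2 x" .
qed

lemma Hk2_C2:
  assumes l: "0 < l"
    and d0: "\<And>x. x \<in> {0..l} \<Longrightarrow> (F0 has_vector_derivative F1 x) (at x within {0..l})"
    and d1: "\<And>x. x \<in> {0..l} \<Longrightarrow> (F1 has_vector_derivative F2 x) (at x within {0..l})"
    and c2: "continuous_on {0..l} F2"
  shows "Hk 2 l F0"
  unfolding Hk_def
proof (intro allI impI)
  have c1: "continuous_on {0..l} F1" by (rule continuous_on_vector_derivative) (rule d1)
  fix j :: nat assume "j < 2"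
  then consider "j = 0" | "j = 1" by linarith
  then show "\<exists>g. L2_on {0..l} g \<and> (\<forall>x\<in>{0..l}. nderiv l j F0 x = nderiv l j F0 0 + (LINT t:{0..x}|lebesgue. g t))"
  proof cases
    case 1
    show ?thesis
    proof (intro exI conjI ballI)
      show "L2_on {0..l} F1" by (rule L2_cont[OF c1])
      fix x assume x: "x \<in> {0..l}"
      show "nderiv l j F0 x = nderiv l j F0 0 + (LINT t:{0..x}|lebesgue. F1 t)"
        using FTC_C1[OF d0 c1 x] 1 by simp
    qed
  next
    case 2
    show ?thesis
    proof (intro exI conjI ballI)
      show "L2_on {0..l} F2" by (rule L2_cont[OF c2])
      fix x assume x: "x \<in> {0..l}"
      have 0: "0 \<in> {0..l}" using l by simp
      show "nderiv l j F0 x = nderiv l j F0 0 + (LINT t:{0..x}|lebesgue. F2 t)"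
        using FTC_C1[OF d1 c2 x] nderiv_C2(1)[OF l d0 d1 x] nderiv_C2(1)[OF l d0 d1 0] 2 by simp
    qed
  qed
qed

lemma zero_fun_props:
  assumes l: "0 < l"
  shows "Hk 2 l (\<lambda>_. 0)" "\<And>x. x \<in> {0..l} \<Longrightarrow> nderiv l 1 (\<lambda>_. 0) x = 0"
    "\<And>x. x \<in> {0..l} \<Longrightarrow> nderiv l 2 (\<lambda>_. 0) x = 0"
proof -
  have d: "\<And>x. x \<in> {0..l} \<Longrightarrow> ((\<lambda>_::real. 0::complex) has_vector_derivative (\<lambda>_. 0) x) (at x within {0..l})"
    by (rule has_vector_derivative_const)
  show "Hk 2 l (\<lambda>_. 0)" using Hk2_C2[OF l d d continuous_on_const] by simp
  show "\<And>x. x \<in> {0..l} \<Longrightarrow> nderiv l 1 (\<lambda>_. 0) x = 0" using nderiv_C2(1)[OF l d d] by simp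
  show "\<And>x. x \<in> {0..l} \<Longrightarrow> nderiv l 2 (\<lambda>_. 0) x = 0" using nderiv_C2(2)[OF l d d] by simp
qed

lemma hvd_cubic:
  fixes a b c d :: complex
  shows "((\<lambda>x::real. a + b * of_real x + c * of_real (x^2) + d * of_real (x^3)) has_vector_derivative
     (b + c * of_real (2*x) + d * of_real (3*x^2))) (at x within S)"
proof -
  have 1: "((\<lambda>x::real. of_real x :: complex) has_vector_derivative of_real 1) (at x within S)"
    by (rule has_vector_derivative_of_real) (auto intro!: derivative_eq_intros)
  have 2: "((\<lambda>x::real. of_real (x^2) :: complex) has_vector_derivative of_real (2*x)) (at x within S)"
    by (rule has_vector_derivative_of_real) (auto intro!: derivative_eq_intros)
  have 3: "((\<lambda>x::real. of_real (x^3) :: complex) has_vector_derivative of_real (3*x^2)) (at x within S)"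
    by (rule has_vector_derivative_of_real) (auto intro!: derivative_eq_intros)
  have "((\<lambda>x::real. a + b * of_real x + c * of_real (x^2) + d * of_real (x^3)) has_vector_derivative
     (0 + b * of_real 1 + c * of_real (2*x) + d * of_real (3*x^2))) (at x within S)"
    by (intro has_vector_derivative_add has_vector_derivative_const has_vector_derivative_mult_right 1 2 3)
  then show ?thesis by simp
qed

lemma hvd_lin2:
  fixes b c d :: complex
  shows "((\<lambda>x::real. b + c * of_real (2*x) + d * of_real (3*x^2)) has_vector_derivative
     (c * of_real 2 + d * of_real (6*x))) (at x within S)"
proof -
  have 1: "((\<lambda>x::real. of_real (2*x) :: complex) has_vector_derivative of_real 2) (at x within S)"
    by (rule has_vector_derivative_of_real) (auto intro!: derivative_eq_intros)
  have 2: "((\<lambda>x::real. of_real (3*x^2) :: complex) has_vector_derivative of_real (6*x)) (at x within S)"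
    by (rule has_vector_derivative_of_real) (auto intro!: derivative_eq_intros)
  have "((\<lambda>x::real. b + c * of_real (2*x) + d * of_real (3*x^2)) has_vector_derivative
     (0 + c * of_real 2 + d * of_real (6*x))) (at x within S)"
    by (intro has_vector_derivative_add has_vector_derivative_const has_vector_derivative_mult_right 1 2)
  then show ?thesis by simp
qed

definition herm_c2 :: "real \<Rightarrow> complex \<Rightarrow> complex \<Rightarrow> complex \<Rightarrow> complex \<Rightarrow> complex" where
  "herm_c2 l a0 a1 b0 b1 = (3*(a1 - a0) - (2*b0 + b1) * of_real l) / (of_real l)^2"
definition herm_c3 :: "real \<Rightarrow> complex \<Rightarrow> complex \<Rightarrow> complex \<Rightarrow> complex \<Rightarrow> complex" where
  "herm_c3 l a0 a1 b0 b1 = (2*(a0 - a1) + (b0 + b1) * of_real l) / (of_real l)^3"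
definition herm :: "real \<Rightarrow> complex \<Rightarrow> complex \<Rightarrow> complex \<Rightarrow> complex \<Rightarrow> real \<Rightarrow> complex" where
  "herm l a0 a1 b0 b1 = (\<lambda>x. a0 + b0 * of_real x + herm_c2 l a0 a1 b0 b1 * of_real (x^2) + herm_c3 l a0 a1 b0 b1 * of_real (x^3))"

lemma herm_props:
  assumes l: "0 < l"
  shows "Hk 2 l (herm l a0 a1 b0 b1)" "herm l a0 a1 b0 b1 0 = a0" "herm l a0 a1 b0 b1 l = a1"
    "nderiv l 1 (herm l a0 a1 b0 b1) 0 = b0" "nderiv l 1 (herm l a0 a1 b0 b1) l = b1"
proof -
  define c2 where "c2 = herm_c2 l a0 a1 b0 b1"
  define c3 where "c3 = herm_c3 l a0 a1 b0 b1"
  define F1 where "F1 = (\<lambda>x::real. b0 + c2 * of_real (2*x) + c3 * of_real (3*x^2))"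
  define F2 where "F2 = (\<lambda>x::real. c2 * of_real 2 + c3 * of_real (6*x))"
  have hd: "herm l a0 a1 b0 b1 = (\<lambda>x. a0 + b0 * of_real x + c2 * of_real (x^2) + c3 * of_real (x^3))"
    by (simp add: herm_def c2_def c3_def)
  have d0: "(herm l a0 a1 b0 b1 has_vector_derivative F1 x) (at x within {0..l})" for x
    unfolding hd F1_def by (rule hvd_cubic)
  have d1: "(F1 has_vector_derivative F2 x) (at x within {0..l})" for x
    unfolding F1_def F2_def by (rule hvd_lin2)
  have c: "continuous_on {0..l} F2" unfolding F2_def by (intro continuous_intros)
  show "Hk 2 l (herm l a0 a1 b0 b1)" by (rule Hk2_C2[OF l d0 d1 c])
  have L: "(of_real l :: complex) \<noteq> 0" using l by simp
  show "herm l a0 a1 b0 b1 0 = a0" by (simp add: hd)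
  show "herm l a0 a1 b0 b1 l = a1"
    using L by (simp add: hd c2_def c3_def herm_c2_def herm_c3_def field_simps; simp add: algebra_simps power2_eq_square power3_eq_cube)
  have 0: "0 \<in> {0..l}" and ll: "l \<in> {0..l}" using l by auto
  show "nderiv l 1 (herm l a0 a1 b0 b1) 0 = b0" using nderiv_C2(1)[OF l d0 d1 0] by (simp add: F1_def)
  have "F1 l = b0 + 2 * (c2 * of_real l) + 3 * (c3 * (of_real l)^2)" by (simp add: F1_def algebra_simps)
  also have "c2 * of_real l = (3*(a1 - a0) - (2*b0 + b1) * of_real l) / of_real l"
    using L by (simp add: c2_def herm_c2_def power2_eq_square)
  also have "c3 * (of_real l)^2 = (2*(a0 - a1) + (b0 + b1) * of_real l) / of_real l"
    using L by (simp add: c3_def herm_c3_def power2_eq_square power3_eq_cube)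
  also have "b0 + 2 * ((3*(a1 - a0) - (2*b0 + b1) * of_real l) / of_real l) + 3 * ((2*(a0 - a1) + (b0 + b1) * of_real l) / of_real l) = b1"
    using L by (simp add: field_simps)
  finally show "nderiv l 1 (herm l a0 a1 b0 b1) l = b1" using nderiv_C2(1)[OF l d0 d1 ll] by simp
qed

lemma borel_measurable_cnj'[measurable (raw)]:
  "f \<in> borel_measurable M \<Longrightarrow> (\<lambda>x. cnj (f x :: complex)) \<in> borel_measurable M"
proof -
  have "(\<lambda>z::complex. cnj z) \<in> borel_measurable borel" by (intro borel_measurable_continuous_onI continuous_intros)
  then show "f \<in> borel_measurable M \<Longrightarrow> (\<lambda>x. cnj (f x :: complex)) \<in> borel_measurable M"
    by (rule measurable_compose[rotated])
qed

lemma LINT_singleton: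
  fixes a :: real and f :: "real \<Rightarrow> 'b::{banach, second_countable_topology}"
  shows "(LINT t:{a..a}|lebesgue. f t) = 0"
proof -
  have ae: "AE t in lebesgue. (\<lambda>_. 0::'b) t = indicator {a..a} t *\<^sub>R f t"
  proof -
    have "AE t in lebesgue. t \<notin> {a}" by (rule AE_not_in_finite) simp
    then show ?thesis by eventually_elim auto
  qed
  have m: "(\<lambda>t. indicator {a..a} t *\<^sub>R f t) \<in> borel_measurable lebesgue"
    by (rule lebesgue_measurable_AE[OF _ ae]) simp
  have "integral\<^sup>L lebesgue (\<lambda>t. indicator {a..a} t *\<^sub>R f t) = integral\<^sup>L lebesgue (\<lambda>_::real. 0::'b)"
    by (rule integral_cong_AE[OF m]) (use ae in \<open>auto elim: eventually_mono\<close>)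
  then show ?thesis by (simp add: set_lebesgue_integral_def)
qed

lemma L2_prod:
  assumes a: "L2_on S a" and b: "L2_on S b"
  shows "set_integrable lebesgue S (\<lambda>x. a x * cnj (b x))"
proof -
  have ma: "(\<lambda>x. indicator S x *\<^sub>R a x) \<in> borel_measurable lebesgue" using a by (simp add: L2_on_def set_borel_measurable_def)
  have mb: "(\<lambda>x. indicator S x *\<^sub>R b x) \<in> borel_measurable lebesgue" using b by (simp add: L2_on_def set_borel_measurable_def)
  have ia: "integrable lebesgue (\<lambda>x. indicator S x *\<^sub>R (cmod (a x))\<^sup>2)" using a by (simp add: L2_on_def set_integrable_def)
  have ib: "integrable lebesgue (\<lambda>x. indicator S x *\<^sub>R (cmod (b x))\<^sup>2)" using b by (simp add: L2_on_def set_integrable_def)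
  have m: "(\<lambda>x. indicator S x *\<^sub>R (a x * cnj (b x))) \<in> borel_measurable lebesgue"
  proof -
    have "(\<lambda>x. (indicator S x *\<^sub>R a x) * cnj (indicator S x *\<^sub>R b x)) \<in> borel_measurable lebesgue"
      using ma mb by measurable
    moreover have "(\<lambda>x. (indicator S x *\<^sub>R a x) * cnj (indicator S x *\<^sub>R b x)) = (\<lambda>x. indicator S x *\<^sub>R (a x * cnj (b x)))"
      by (auto simp: indicator_def fun_eq_iff)
    ultimately show ?thesis by simp
  qed
  show ?thesis unfolding set_integrable_def
  proof (rule Bochner_Integration.integrable_bound[OF Bochner_Integration.integrable_add[OF ia ib] m], intro AE_I2)
    fix x
    have "2 * (cmod (a x) * cmod (b x)) \<le> (cmod (a x))\<^sup>2 + (cmod (b x))\<^sup>2"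
      using sum_squares_bound[of "cmod (a x)" "cmod (b x)"] by (simp add: algebra_simps)
    moreover have "0 \<le> cmod (a x) * cmod (b x)" by simp
    ultimately have "cmod (a x) * cmod (b x) \<le> (cmod (a x))\<^sup>2 + (cmod (b x))\<^sup>2" by linarith
    then show "norm (indicator S x *\<^sub>R (a x * cnj (b x))) \<le> norm (indicator S x *\<^sub>R (cmod (a x))\<^sup>2 + indicator S x *\<^sub>R (cmod (b x))\<^sup>2)"
      by (auto simp: indicator_def norm_mult)
  qed
qed

lemma L2_minus_cont:
  assumes w: "L2_on {a..b} w" and c: "continuous_on {a..b} c"
  shows "L2_on {a..b} (\<lambda>x. w x - c x)"
proof -
  have mw: "(\<lambda>x. indicator {a..b} x *\<^sub>R w x) \<in> borel_measurable lebesgue" using w by (simp add: L2_on_def set_borel_measurable_def)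
  have iw: "integrable lebesgue (\<lambda>x. indicator {a..b} x *\<^sub>R (cmod (w x))\<^sup>2)" using w by (simp add: L2_on_def set_integrable_def)
  have ci: "set_integrable lebesgue {a..b} c" by (rule absolutely_integrable_continuous_real[OF c])
  have mc: "(\<lambda>x. indicator {a..b} x *\<^sub>R c x) \<in> borel_measurable lebesgue" using ci by (auto simp: set_integrable_def)
  have "continuous_on {a..b} (\<lambda>x. (cmod (c x))\<^sup>2)" by (intro continuous_intros c)
  then have ic: "integrable lebesgue (\<lambda>x. indicator {a..b} x *\<^sub>R (cmod (c x))\<^sup>2)"
    using absolutely_integrable_continuous_real[of a b "\<lambda>x. (cmod (c x))\<^sup>2"] by (simp add: set_integrable_def)
  have m: "(\<lambda>x. indicator {a..b} x *\<^sub>R (w x - c x)) \<in> borel_measurable lebesgue"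
  proof -
    have "(\<lambda>x. indicator {a..b} x *\<^sub>R w x - indicator {a..b} x *\<^sub>R c x) \<in> borel_measurable lebesgue"
      using mw mc by measurable
    then show ?thesis by (simp add: scaleR_diff_right)
  qed
  have m2: "(\<lambda>x. indicator {a..b} x *\<^sub>R (cmod (w x - c x))\<^sup>2) \<in> borel_measurable lebesgue"
  proof -
    have "(\<lambda>x. (cmod (indicator {a..b} x *\<^sub>R (w x - c x)))\<^sup>2) \<in> borel_measurable lebesgue"
      using m by measurable
    moreover have "(\<lambda>x. (cmod (indicator {a..b} x *\<^sub>R (w x - c x)))\<^sup>2) = (\<lambda>x. indicator {a..b} x *\<^sub>R (cmod (w x - c x))\<^sup>2)"
      by (auto simp: indicator_def fun_eq_iff)
    ultimately show ?thesis by simp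
  qed
  have i2: "integrable lebesgue (\<lambda>x. indicator {a..b} x *\<^sub>R (cmod (w x - c x))\<^sup>2)"
  proof (rule Bochner_Integration.integrable_bound[OF Bochner_Integration.integrable_add[OF integrable_mult_right[OF iw] integrable_mult_right[OF ic]] m2], intro AE_I2)
    fix x
    have "(cmod (w x - c x))\<^sup>2 \<le> (cmod (w x) + cmod (c x))\<^sup>2"
      by (intro power_mono norm_triangle_ineq4) simp
    also have "\<dots> \<le> 2 * (cmod (w x))\<^sup>2 + 2 * (cmod (c x))\<^sup>2"
      using sum_squares_bound[of "cmod (w x)" "cmod (c x)"] by (simp add: power2_eq_square algebra_simps)
    finally have "(cmod (w x - c x))\<^sup>2 \<le> 2 * (cmod (w x))\<^sup>2 + 2 * (cmod (c x))\<^sup>2" .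
    then show "norm (indicator {a..b} x *\<^sub>R (cmod (w x - c x))\<^sup>2) \<le> norm (2 * (indicator {a..b} x *\<^sub>R (cmod (w x))\<^sup>2) + 2 * (indicator {a..b} x *\<^sub>R (cmod (c x))\<^sup>2))"
      by (auto simp: indicator_def)
  qed
  show ?thesis using m i2 by (simp add: L2_on_def set_borel_measurable_def set_integrable_def)
qed

lemma lin_int:
  fixes a b :: complex
  assumes l: "0 < l"
  shows "(LINT x:{0..l}|lebesgue. a + b * of_real x) = a * of_real l + b * (of_real l * of_real l) / 2"
proof -
  have d: "((\<lambda>x::real. a * of_real x + b * (of_real x * of_real x) / 2) has_vector_derivative (a + b * of_real x)) (at x within {0..l})" for x
    by (auto intro!: derivative_eq_intros simp: algebra_simps)
  have c: "continuous_on {0..l} (\<lambda>x::real. a + b * of_real x)" by (intro continuous_intros)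
  show ?thesis using FTC_C1[OF d c, of l] l by simp
qed

lemma quad_int:
  fixes a b :: complex
  assumes l: "0 < l"
  shows "(LINT x:{0..l}|lebesgue. of_real x * (a + b * of_real x)) = a * (of_real l * of_real l) / 2 + b * (of_real l * of_real l * of_real l) / 3"
proof -
  have d: "((\<lambda>x::real. a * (of_real x * of_real x) / 2 + b * (of_real x * of_real x * of_real x) / 3) has_vector_derivative (of_real x * (a + b * of_real x))) (at x within {0..l})" for x
    by (auto intro!: derivative_eq_intros simp: algebra_simps)
  have c: "continuous_on {0..l} (\<lambda>x::real. of_real x * (a + b * of_real x))" by (intro continuous_intros)
  show ?thesis using FTC_C1[OF d c, of l] l by simp
qed

lemma set_integrable_imp_sbm:
  "set_integrable lebesgue S (f :: real \<Rightarrow> complex) \<Longrightarrow> set_borel_measurable lebesgue S f"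
  by (simp add: set_integrable_def set_borel_measurable_def borel_measurable_integrable)

lemma DBR:
  fixes w v :: "real \<Rightarrow> complex"
  assumes l: "0 < l" and w: "L2_on {0..l} w" and vi: "set_integrable lebesgue {0..l} v"
    and H: "\<And>\<phi>. Hk 2 l \<phi> \<Longrightarrow> \<phi> 0 = 0 \<Longrightarrow> \<phi> l = 0 \<Longrightarrow> nderiv l 1 \<phi> 0 = 0 \<Longrightarrow> nderiv l 1 \<phi> l = 0 \<Longrightarrow>
            (LINT x:{0..l}|lebesgue. w x * cnj (nderiv l 2 \<phi> x)) = (LINT x:{0..l}|lebesgue. v x * cnj (\<phi> x))"
  obtains \<alpha> \<beta> where "AE x in lebesgue. x \<in> {0..l} \<longrightarrow> w x = (LINT s:{0..x}|lebesgue. (LINT t:{0..s}|lebesgue. v t)) + \<alpha> + \<beta> * of_real x"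
proof -
  have 0: "0 \<in> {0..l}" and ll: "l \<in> {0..l}" using l by auto
  define V where "V = (\<lambda>x. LINT t:{0..x}|lebesgue. v t)"
  define W where "W = (\<lambda>x. LINT s:{0..x}|lebesgue. V s)"
  have Vc: "continuous_on {0..l} V" by (rule AC_cont[OF vi, of V 0]) (simp add: V_def)
  have dW: "(W has_vector_derivative V x) (at x within {0..l})" if "x \<in> {0..l}" for x
    by (rule FTC_cont[OF Vc _ that, of W 0]) (simp add: W_def)
  have Wc: "continuous_on {0..l} W" by (rule continuous_on_vector_derivative) (rule dW)
  have V0: "V 0 = 0" using LINT_singleton[of 0] by (simp add: V_def)
  have W0: "W 0 = 0" using LINT_singleton[of 0] by (simp add: W_def)
  define z where "z = (\<lambda>x. w x - W x)"
  have zL: "L2_on {0..l} z" unfolding z_def by (rule L2_minus_cont[OF w Wc])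
  have zi: "set_integrable lebesgue {0..l} z" by (rule L2_integrable[OF zL])
  have claim: "(LINT x:{0..l}|lebesgue. z x * cnj (nderiv l 2 \<phi> x)) = 0"
    if H\<phi>: "Hk 2 l \<phi>" and b: "\<phi> 0 = 0" "\<phi> l = 0" "nderiv l 1 \<phi> 0 = 0" "nderiv l 1 \<phi> l = 0" for \<phi>
  proof -
    have d\<phi>: "(\<phi> has_vector_derivative nderiv l 1 \<phi> x) (at x within {0..l})" if "x \<in> {0..l}" for x
      using Hk_deriv[OF H\<phi> l _ that, of 0] by (simp add: nderiv_num)
    have c1: "continuous_on {0..l} (nderiv l 1 \<phi>)" by (rule Hk_cont[OF H\<phi> l]) simp
    have L2\<phi>: "L2_on {0..l} (nderiv l 2 \<phi>)" using Hk_D(1)[OF H\<phi> l, of 1] by (simp add: nderiv_num)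
    have \<phi>1: "nderiv l 1 \<phi> x = nderiv l 1 \<phi> 0 + (LINT t:{0..x}|lebesgue. nderiv l 2 \<phi> t)" if "x \<in> {0..l}" for x
      using Hk_D(2)[OF H\<phi> l _ that, of 1] by (simp add: nderiv_num)
    define X where "X = (LINT x:{0..l}|lebesgue. W x * cnj (nderiv l 2 \<phi> x))"
    define Y where "Y = (LINT x:{0..l}|lebesgue. V x * cnj (nderiv l 1 \<phi> x))"
    define Z where "Z = (LINT x:{0..l}|lebesgue. v x * cnj (\<phi> x))"
    have A: "X + Y = W l * cnj (nderiv l 1 \<phi> l) - W 0 * cnj (nderiv l 1 \<phi> 0)"
      unfolding X_def Y_def
    proof (rule IBP[of l W V "\<lambda>x. cnj (nderiv l 2 \<phi> x)" "\<lambda>x. cnj (nderiv l 1 \<phi> x)"])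
      show "0 \<le> l" using l by simp
      show "\<And>x. x \<in> {0..l} \<Longrightarrow> (W has_vector_derivative V x) (at x within {0..l})" by (rule dW)
      show "continuous_on {0..l} V" by (rule Vc)
      show "set_integrable lebesgue {0..l} (\<lambda>x. cnj (nderiv l 2 \<phi> x))" by (intro set_integrable_cnj L2_integrable L2\<phi>)
      fix x assume x: "x \<in> {0..l}"
      show "cnj (nderiv l 1 \<phi> x) = cnj (nderiv l 1 \<phi> 0) + (LINT t:{0..x}|lebesgue. cnj (nderiv l 2 \<phi> t))"
        using \<phi>1[OF x] by (simp add: LINT_cnj)
    qed
    have B0: "(LINT x:{0..l}|lebesgue. cnj (\<phi> x) * v x) + (LINT x:{0..l}|lebesgue. cnj (nderiv l 1 \<phi> x) * V x) = cnj (\<phi> l) * V l - cnj (\<phi> 0) * V 0"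
    proof (rule IBP[of l "\<lambda>x. cnj (\<phi> x)" "\<lambda>x. cnj (nderiv l 1 \<phi> x)" v V])
      show "0 \<le> l" using l by simp
      show "((\<lambda>x. cnj (\<phi> x)) has_vector_derivative cnj (nderiv l 1 \<phi> x)) (at x within {0..l})" if "x \<in> {0..l}" for x
        by (rule has_vector_derivative_cnj[OF d\<phi>[OF that]])
      show "continuous_on {0..l} (\<lambda>x. cnj (nderiv l 1 \<phi> x))" by (intro continuous_intros c1)
      show "set_integrable lebesgue {0..l} v" by (rule vi)
      fix x assume "x \<in> {0..l}" then show "V x = V 0 + (LINT t:{0..x}|lebesgue. v t)" unfolding V0 by (simp add: V_def)
    qed
    have e1: "(LINT x:{0..l}|lebesgue. cnj (\<phi> x) * v x) = Z" unfolding Z_def by (simp add: mult.commute)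
    have e2: "(LINT x:{0..l}|lebesgue. cnj (nderiv l 1 \<phi> x) * V x) = Y" unfolding Y_def by (simp add: mult.commute)
    have B: "Z + Y = 0" using B0 unfolding e1 e2 using b by simp
    have A': "X + Y = 0" using A b by simp
    have XZ: "X = Z" using A' B by (metis add_right_cancel)
    have iw: "set_integrable lebesgue {0..l} (\<lambda>x. w x * cnj (nderiv l 2 \<phi> x))" by (rule L2_prod[OF w L2\<phi>])
    have iW: "set_integrable lebesgue {0..l} (\<lambda>x. W x * cnj (nderiv l 2 \<phi> x))"
      by (rule set_integrable_cont_mult[OF Wc set_integrable_cnj[OF L2_integrable[OF L2\<phi>]]])
    have "(LINT x:{0..l}|lebesgue. z x * cnj (nderiv l 2 \<phi> x)) = (LINT x:{0..l}|lebesgue. w x * cnj (nderiv l 2 \<phi> x) - W x * cnj (nderiv l 2 \<phi> x))"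
      by (simp add: z_def left_diff_distrib)
    also have "\<dots> = (LINT x:{0..l}|lebesgue. w x * cnj (nderiv l 2 \<phi> x)) - X"
      unfolding X_def by (rule set_integral_diff(2)[OF iw iW])
    also have "(LINT x:{0..l}|lebesgue. w x * cnj (nderiv l 2 \<phi> x)) = Z"
      unfolding Z_def by (rule H[OF H\<phi> b])
    finally show ?thesis using XZ by simp
  qed
  define Z0 where "Z0 = (LINT x:{0..l}|lebesgue. z x)"
  define Z1 where "Z1 = (LINT x:{0..l}|lebesgue. of_real x * z x)"
  define L where "L = (of_real l :: complex)"
  have L0: "L \<noteq> 0" using l by (simp add: L_def)
  define \<alpha> where "\<alpha> = 4 * Z0 / L - 6 * Z1 / (L * L)"
  define \<beta> where "\<beta> = 12 * Z1 / (L * L * L) - 6 * Z0 / (L * L)"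
  define \<psi> where "\<psi> = (\<lambda>x. z x - (\<alpha> + \<beta> * of_real x))"
  have \<psi>L: "L2_on {0..l} \<psi>" unfolding \<psi>_def by (rule L2_minus_cont[OF zL]) (intro continuous_intros)
  have \<psi>i: "set_integrable lebesgue {0..l} \<psi>" by (rule L2_integrable[OF \<psi>L])
  have ilin: "set_integrable lebesgue {0..l} (\<lambda>x. \<alpha> + \<beta> * of_real x)"
    by (rule absolutely_integrable_continuous_real) (intro continuous_intros)
  have iquad: "set_integrable lebesgue {0..l} (\<lambda>x. of_real x * (\<alpha> + \<beta> * of_real x))"
    by (rule absolutely_integrable_continuous_real) (intro continuous_intros)
  have ixz: "set_integrable lebesgue {0..l} (\<lambda>x. of_real x * z x)"
    by (rule set_integrable_cont_mult[OF _ zi]) (intro continuous_intros)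
  have int0: "(LINT x:{0..l}|lebesgue. \<psi> x) = 0"
  proof -
    have "(LINT x:{0..l}|lebesgue. \<psi> x) = Z0 - (LINT x:{0..l}|lebesgue. \<alpha> + \<beta> * of_real x)"
      unfolding \<psi>_def Z0_def by (rule set_integral_diff(2)[OF zi ilin])
    also have "\<dots> = Z0 - (\<alpha> * L + \<beta> * (L * L) / 2)" by (simp add: lin_int[OF l] L_def)
    also have "\<dots> = 0" using L0 by (simp add: \<alpha>_def \<beta>_def field_simps; simp add: algebra_simps)
    finally show ?thesis .
  qed
  have int1: "(LINT x:{0..l}|lebesgue. of_real x * \<psi> x) = 0"
  proof -
    have "(LINT x:{0..l}|lebesgue. of_real x * \<psi> x) = (LINT x:{0..l}|lebesgue. of_real x * z x - of_real x * (\<alpha> + \<beta> * of_real x))"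
      by (simp add: \<psi>_def right_diff_distrib)
    also have "\<dots> = Z1 - (LINT x:{0..l}|lebesgue. of_real x * (\<alpha> + \<beta> * of_real x))"
      unfolding Z1_def by (rule set_integral_diff(2)[OF ixz iquad])
    also have "\<dots> = Z1 - (\<alpha> * (L * L) / 2 + \<beta> * (L * L * L) / 3)" by (simp add: quad_int[OF l] L_def)
    also have "\<dots> = 0" using L0 by (simp add: \<alpha>_def \<beta>_def field_simps; simp add: algebra_simps)
    finally show ?thesis .
  qed
  define \<Psi>1 where "\<Psi>1 = (\<lambda>x. LINT t:{0..x}|lebesgue. \<psi> t)"
  define \<phi> where "\<phi> = (\<lambda>x. LINT t:{0..x}|lebesgue. \<Psi>1 t)"
  have \<Psi>1c: "continuous_on {0..l} \<Psi>1" by (rule AC_cont[OF \<psi>i, of \<Psi>1 0]) (simp add: \<Psi>1_def)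
  have \<Psi>10: "\<Psi>1 0 = 0" using LINT_singleton[of 0] by (simp add: \<Psi>1_def)
  have \<Psi>1l: "\<Psi>1 l = 0" using int0 by (simp add: \<Psi>1_def)
  have d\<phi>: "(\<phi> has_vector_derivative \<Psi>1 x) (at x within {0..l})" if "x \<in> {0..l}" for x
    by (rule FTC_cont[OF \<Psi>1c _ that, of \<phi> 0]) (simp add: \<phi>_def)
  have \<phi>0: "\<phi> 0 = 0" using LINT_singleton[of 0] by (simp add: \<phi>_def)
  have n1: "nderiv l 1 \<phi> x = \<Psi>1 x" if "x \<in> {0..l}" for x
    using vd_unique[OF l that d\<phi>[OF that]] by (simp add: nderiv_num nderiv_Suc)
  have \<phi>l: "\<phi> l = 0"
  proof -
    have "(LINT x:{0..l}|lebesgue. of_real x * \<psi> x) + (LINT x:{0..l}|lebesgue. 1 * \<Psi>1 x) = of_real l * \<Psi>1 l - of_real 0 * \<Psi>1 0"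
    proof (rule IBP[of l "\<lambda>x. of_real x" "\<lambda>x. 1" \<psi> \<Psi>1])
      show "0 \<le> l" using l by simp
      show "((\<lambda>x. of_real x) has_vector_derivative 1) (at x within {0..l})" for x
        by (auto intro!: derivative_eq_intros)
      show "continuous_on {0..l} (\<lambda>x. 1::complex)" by (rule continuous_on_const)
      show "set_integrable lebesgue {0..l} \<psi>" by (rule \<psi>i)
      fix x assume "x \<in> {0..l}" then show "\<Psi>1 x = \<Psi>1 0 + (LINT t:{0..x}|lebesgue. \<psi> t)" unfolding \<Psi>10 by (simp add: \<Psi>1_def)
    qed
    then have "(LINT x:{0..l}|lebesgue. \<Psi>1 x) = 0" using int1 \<Psi>1l \<Psi>10 by simp
    then show ?thesis by (simp add: \<phi>_def)
  qed
  have H\<phi>: "Hk 2 l \<phi>"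
    unfolding Hk_def
  proof (intro allI impI)
    fix j :: nat assume "j < 2"
    then consider "j = 0" | "j = 1" by linarith
    then show "\<exists>g. L2_on {0..l} g \<and> (\<forall>x\<in>{0..l}. nderiv l j \<phi> x = nderiv l j \<phi> 0 + (LINT t:{0..x}|lebesgue. g t))"
    proof cases
      case 1
      show ?thesis
      proof (rule exI[of _ \<Psi>1], intro conjI ballI)
        show "L2_on {0..l} \<Psi>1" by (rule L2_cont[OF \<Psi>1c])
        fix x assume "x \<in> {0..l}"
        show "nderiv l j \<phi> x = nderiv l j \<phi> 0 + (LINT t:{0..x}|lebesgue. \<Psi>1 t)"
          unfolding 1 nderiv_0 \<phi>0 by (simp add: \<phi>_def)
      qed
    next
      case 2
      show ?thesis
      proof (rule exI[of _ \<psi>], intro conjI ballI)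
        show "L2_on {0..l} \<psi>" by (rule \<psi>L)
        fix x assume x: "x \<in> {0..l}"
        show "nderiv l j \<phi> x = nderiv l j \<phi> 0 + (LINT t:{0..x}|lebesgue. \<psi> t)"
          using n1[OF x] n1[OF 0] \<Psi>10 2 by (simp add: \<Psi>1_def)
      qed
    qed
  qed
  have ae2: "AE x in lebesgue. x \<in> {0..l} \<longrightarrow> nderiv l 2 \<phi> x = \<psi> x"
  proof -
    have "AE x in lebesgue. x \<in> {0..l} \<longrightarrow> vector_derivative \<Psi>1 (at x within {0..l}) = \<psi> x"
      by (rule AC_deriv_ae[OF l \<psi>i]) (unfold \<Psi>10, simp add: \<Psi>1_def)
    then show ?thesis
    proof (rule eventually_mono, intro impI)
      fix x assume h: "x \<in> {0..l} \<longrightarrow> vector_derivative \<Psi>1 (at x within {0..l}) = \<psi> x" and x: "x \<in> {0..l}"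
      have "nderiv l 2 \<phi> x = vector_derivative (nderiv l 1 \<phi>) (at x within {0..l})"
        by (simp only: nderiv_num(2) nderiv_Suc)
      also have "\<dots> = vector_derivative \<Psi>1 (at x within {0..l})" by (rule vd_cong[OF n1 x])
      finally show "nderiv l 2 \<phi> x = \<psi> x" using h x by simp
    qed
  qed
  have c\<phi>: "(LINT x:{0..l}|lebesgue. z x * cnj (nderiv l 2 \<phi> x)) = 0"
    by (rule claim[OF H\<phi> \<phi>0 \<phi>l]) (use n1[OF 0] n1[OF ll] \<Psi>10 \<Psi>1l in auto)
  have L2\<phi>: "L2_on {0..l} (nderiv l 2 \<phi>)" using Hk_D(1)[OF H\<phi> l, of 1] by (simp add: nderiv_num)
  have z\<psi>: "(LINT x:{0..l}|lebesgue. z x * cnj (\<psi> x)) = 0"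
  proof -
    have "(LINT x:{0..l}|lebesgue. z x * cnj (nderiv l 2 \<phi> x)) = (LINT x:{0..l}|lebesgue. z x * cnj (\<psi> x))"
    proof (rule LINT_cong_AE)
      show "set_borel_measurable lebesgue {0..l} (\<lambda>x. z x * cnj (nderiv l 2 \<phi> x))"
        by (rule set_integrable_imp_sbm[OF L2_prod[OF zL L2\<phi>]])
      show "set_borel_measurable lebesgue {0..l} (\<lambda>x. z x * cnj (\<psi> x))"
        by (rule set_integrable_imp_sbm[OF L2_prod[OF zL \<psi>L]])
      show "AE x in lebesgue. x \<in> {0..l} \<longrightarrow> z x * cnj (nderiv l 2 \<phi> x) = z x * cnj (\<psi> x)"
        using ae2 by (rule eventually_mono) simp
    qed auto
    then show ?thesis using c\<phi> by simp
  qed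
  have \<psi>\<psi>: "(LINT x:{0..l}|lebesgue. \<psi> x * cnj (\<psi> x)) = 0"
  proof -
    have i1: "set_integrable lebesgue {0..l} (\<lambda>x. z x * cnj (\<psi> x))" by (rule L2_prod[OF zL \<psi>L])
    have i2: "set_integrable lebesgue {0..l} (\<lambda>x. (\<alpha> + \<beta> * of_real x) * cnj (\<psi> x))"
      by (rule set_integrable_cont_mult[OF _ set_integrable_cnj[OF \<psi>i]]) (intro continuous_intros)
    have i3: "set_integrable lebesgue {0..l} (\<lambda>x. \<alpha> * cnj (\<psi> x))" using set_integrable_cnj[OF \<psi>i] by simp
    have i4: "set_integrable lebesgue {0..l} (\<lambda>x. \<beta> * (of_real x * cnj (\<psi> x)))"
    proof -
      have "set_integrable lebesgue {0..l} (\<lambda>x. of_real x * cnj (\<psi> x))"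
        by (rule set_integrable_cont_mult[OF _ set_integrable_cnj[OF \<psi>i]]) (intro continuous_intros)
      then show ?thesis by simp
    qed
    have "(LINT x:{0..l}|lebesgue. \<psi> x * cnj (\<psi> x)) = (LINT x:{0..l}|lebesgue. z x * cnj (\<psi> x) - (\<alpha> + \<beta> * of_real x) * cnj (\<psi> x))"
      by (simp add: \<psi>_def left_diff_distrib)
    also have "\<dots> = 0 - (LINT x:{0..l}|lebesgue. (\<alpha> + \<beta> * of_real x) * cnj (\<psi> x))"
      using set_integral_diff(2)[OF i1 i2] z\<psi> by simp
    also have "(LINT x:{0..l}|lebesgue. (\<alpha> + \<beta> * of_real x) * cnj (\<psi> x)) = (LINT x:{0..l}|lebesgue. \<alpha> * cnj (\<psi> x) + \<beta> * (of_real x * cnj (\<psi> x)))"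
      by (simp add: algebra_simps)
    also have "\<dots> = (LINT x:{0..l}|lebesgue. \<alpha> * cnj (\<psi> x)) + (LINT x:{0..l}|lebesgue. \<beta> * (of_real x * cnj (\<psi> x)))"
      by (rule set_integral_add(2)[OF i3 i4])
    also have "(LINT x:{0..l}|lebesgue. \<alpha> * cnj (\<psi> x)) = \<alpha> * cnj (LINT x:{0..l}|lebesgue. \<psi> x)"
      by (simp add: set_integral_mult_right LINT_cnj)
    also have "(LINT x:{0..l}|lebesgue. \<beta> * (of_real x * cnj (\<psi> x))) = \<beta> * cnj (LINT x:{0..l}|lebesgue. of_real x * \<psi> x)"
    proof -
      have "(LINT x:{0..l}|lebesgue. of_real x * cnj (\<psi> x)) = (LINT x:{0..l}|lebesgue. cnj (of_real x * \<psi> x))" by simp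
      also have "\<dots> = cnj (LINT x:{0..l}|lebesgue. of_real x * \<psi> x)" by (rule LINT_cnj)
      finally show ?thesis by (simp add: set_integral_mult_right)
    qed
    finally show ?thesis using int0 int1 by simp
  qed
  have sq0: "(LINT x:{0..l}|lebesgue. (cmod (\<psi> x))\<^sup>2) = 0"
  proof -
    have i: "set_integrable lebesgue {0..l} (\<lambda>x. \<psi> x * cnj (\<psi> x))" by (rule L2_prod[OF \<psi>L \<psi>L])
    have "Re (LINT x:{0..l}|lebesgue. \<psi> x * cnj (\<psi> x)) = (LINT x:{0..l}|lebesgue. Re (\<psi> x * cnj (\<psi> x)))"
      by (rule LINT_Re_Im(1)[OF i])
    moreover have "Re (\<psi> x * cnj (\<psi> x)) = (cmod (\<psi> x))\<^sup>2" for x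
      by (subst cmod_power2) (simp add: power2_eq_square)
    ultimately show ?thesis using \<psi>\<psi> by simp
  qed
  have ae\<psi>: "AE x in lebesgue. x \<in> {0..l} \<longrightarrow> \<psi> x = 0"
  proof -
    have i: "integrable lebesgue (\<lambda>x. indicator {0..l} x *\<^sub>R (cmod (\<psi> x))\<^sup>2)"
      using \<psi>L by (simp add: L2_on_def set_integrable_def)
    have "integral\<^sup>L lebesgue (\<lambda>x. indicator {0..l} x *\<^sub>R (cmod (\<psi> x))\<^sup>2) = 0"
      using sq0 by (simp add: set_lebesgue_integral_def)
    then have "AE x in lebesgue. indicator {0..l} x *\<^sub>R (cmod (\<psi> x))\<^sup>2 = 0"
      using integral_nonneg_eq_0_iff_AE[OF i] by simp
    then show ?thesis by (rule eventually_mono) (auto simp: indicator_def)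
  qed
  show ?thesis
  proof (rule that[of \<alpha> \<beta>])
    show "AE x in lebesgue. x \<in> {0..l} \<longrightarrow> w x = (LINT s:{0..x}|lebesgue. (LINT t:{0..s}|lebesgue. v t)) + \<alpha> + \<beta> * of_real x"
      using ae\<psi> by (rule eventually_mono) (auto simp: \<psi>_def z_def W_def V_def algebra_simps)
  qed
qed

lemma cinner_add_left: "cinner n (\<lambda>i. a i + b i) c = cinner n a c + cinner n b c"
  by (simp add: cinner_def algebra_simps sum.distrib)

lemma cinner_zero_right: "cinner n a (\<lambda>i. 0) = 0"
  by (simp add: cinner_def)

lemma edge_AE_int:
  assumes l: "0 < l" and Hu: "Hk 4 l u" and Hh: "Hk 2 l h" and v: "L2_on {0..l} v"
    and ae: "AE x in lebesgue. x \<in> {0..l} \<longrightarrow> v x = nderiv l 4 u x"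
  shows "(LINT x:{0..l}|lebesgue. nderiv l 4 u x * cnj (h x)) = (LINT x:{0..l}|lebesgue. v x * cnj (h x))"
proof (rule LINT_cong_AE)
  have hL: "L2_on {0..l} h" using L2_cont[OF Hk_cont[OF Hh l, of 0]] by simp
  have uL: "L2_on {0..l} (nderiv l 4 u)" using Hk_D(1)[OF Hu l, of 3] by (simp add: numeral_eq_Suc)
  show "set_borel_measurable lebesgue {0..l} (\<lambda>x. nderiv l 4 u x * cnj (h x))"
    by (rule set_integrable_imp_sbm[OF L2_prod[OF uL hL]])
  show "set_borel_measurable lebesgue {0..l} (\<lambda>x. v x * cnj (h x))"
    by (rule set_integrable_imp_sbm[OF L2_prod[OF v hL]])
  show "AE x in lebesgue. x \<in> {0..l} \<longrightarrow> nderiv l 4 u x * cnj (h x) = v x * cnj (h x)"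
    using ae by (rule eventually_mono) auto
qed auto

lemma form_green:
  assumes lpos: "\<And>e. e < E \<Longrightarrow> 0 < len e" and Hu: "HkG 4 E len u" and v: "L2G E len v"
    and ae: "\<And>e. e < E \<Longrightarrow> AE x in lebesgue. x \<in> {0..len e} \<longrightarrow> v e x = nderiv (len e) 4 (u e) x"
    and Hh: "HkG 2 E len h"
  shows "form_a E len R u h = L2inner E len v h - cinner (4*E) (\<lambda>i. bv32 E len u i + R (bv01 E len u) i) (bv01 E len h)"
proof -
  have "form_a E len R u h = (\<Sum>e<E. LINT x:{0..len e}|lebesgue. nderiv (len e) 4 (u e) x * cnj (h e x))
      - cinner (4*E) (bv32 E len u) (bv01 E len h) - cinner (4*E) (R (bv01 E len u)) (bv01 E len h)"
    by (simp only: form_a_def green_global[OF lpos Hu Hh])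
  also have "(\<Sum>e<E. LINT x:{0..len e}|lebesgue. nderiv (len e) 4 (u e) x * cnj (h e x)) = L2inner E len v h"
    unfolding L2inner_def
  proof (rule sum.cong[OF refl])
    fix e assume "e \<in> {..<E}"
    then have e: "e < E" by simp
    show "(LINT x:{0..len e}|lebesgue. nderiv (len e) 4 (u e) x * cnj (h e x)) = (LINT x:{0..len e}|lebesgue. v e x * cnj (h e x))"
      by (rule edge_AE_int[OF lpos[OF e] _ _ _ ae[OF e]]) (use Hu Hh v e in \<open>auto simp: HkG_def L2G_def\<close>)
  qed
  finally show ?thesis by (simp add: cinner_add_left)
qed

lemma edge_reg:
  fixes u v :: "real \<Rightarrow> complex"
  assumes l: "0 < l" and Hu: "Hk 2 l u" and v: "L2_on {0..l} v"
    and H: "\<And>\<phi>. Hk 2 l \<phi> \<Longrightarrow> \<phi> 0 = 0 \<Longrightarrow> \<phi> l = 0 \<Longrightarrow> nderiv l 1 \<phi> 0 = 0 \<Longrightarrow> nderiv l 1 \<phi> l = 0 \<Longrightarrow>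
            (LINT x:{0..l}|lebesgue. nderiv l 2 u x * cnj (nderiv l 2 \<phi> x)) = (LINT x:{0..l}|lebesgue. v x * cnj (\<phi> x))"
  shows "Hk 4 l u" "AE x in lebesgue. x \<in> {0..l} \<longrightarrow> v x = nderiv l 4 u x"
proof -
  have 0: "0 \<in> {0..l}" using l by simp
  have vi: "set_integrable lebesgue {0..l} v" by (rule L2_integrable[OF v])
  have w: "L2_on {0..l} (nderiv l 2 u)" using Hk_D(1)[OF Hu l, of 1] by (simp add: nderiv_num)
  obtain \<alpha> \<beta> where ab: "AE x in lebesgue. x \<in> {0..l} \<longrightarrow> nderiv l 2 u x = (LINT s:{0..x}|lebesgue. (LINT t:{0..s}|lebesgue. v t)) + \<alpha> + \<beta> * of_real x"
    using DBR[OF l w vi H] by blast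
  define Vv where "Vv = (\<lambda>x. LINT t:{0..x}|lebesgue. v t)"
  define Wv where "Wv = (\<lambda>x. LINT s:{0..x}|lebesgue. Vv s)"
  define C where "C = (\<lambda>x. Wv x + \<alpha> + \<beta> * of_real x)"
  define C' where "C' = (\<lambda>x. Vv x + \<beta>)"
  have Vc: "continuous_on {0..l} Vv" by (rule AC_cont[OF vi, of Vv 0]) (simp add: Vv_def)
  have V0: "Vv 0 = 0" using LINT_singleton[of 0] by (simp add: Vv_def)
  have dW: "(Wv has_vector_derivative Vv x) (at x within {0..l})" if "x \<in> {0..l}" for x
    by (rule FTC_cont[OF Vc _ that, of Wv 0]) (simp add: Wv_def)
  have dC: "(C has_vector_derivative C' x) (at x within {0..l})" if "x \<in> {0..l}" for x
  proof -
    have o: "((\<lambda>x::real. of_real x :: complex) has_vector_derivative 1) (at x within {0..l})"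
      by (auto intro!: derivative_eq_intros)
    have "((\<lambda>x. Wv x + \<alpha> + \<beta> * of_real x) has_vector_derivative Vv x + 0 + \<beta> * 1) (at x within {0..l})"
      by (intro has_vector_derivative_add dW[OF that] has_vector_derivative_const has_vector_derivative_mult_right o)
    then show ?thesis by (simp add: C_def C'_def)
  qed
  have C'c: "continuous_on {0..l} C'" unfolding C'_def by (intro continuous_intros Vc)
  have Cc: "continuous_on {0..l} C" by (rule continuous_on_vector_derivative) (rule dC)
  have aeC: "AE x in lebesgue. x \<in> {0..l} \<longrightarrow> nderiv l 2 u x = C x"
    using ab by (rule eventually_mono) (simp add: C_def Wv_def Vv_def)
  have n1: "nderiv l 1 u x = nderiv l 1 u 0 + (LINT t:{0..x}|lebesgue. C t)" if x: "x \<in> {0..l}" for x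
  proof -
    have "nderiv l 1 u x = nderiv l 1 u 0 + (LINT t:{0..x}|lebesgue. nderiv l 2 u t)"
      using Hk_D(2)[OF Hu l _ x, of 1] by (simp add: nderiv_num)
    also have "(LINT t:{0..x}|lebesgue. nderiv l 2 u t) = (LINT t:{0..x}|lebesgue. C t)"
    proof (rule LINT_cong_AE[OF _ _ _ _ _ aeC])
      show "set_borel_measurable lebesgue {0..l} (nderiv l 2 u)" using w by (simp add: L2_on_def)
      show "set_borel_measurable lebesgue {0..l} C" using L2_cont[OF Cc] by (simp add: L2_on_def)
    qed (use x in auto)
    finally show ?thesis .
  qed
  have n2: "nderiv l 2 u x = C x" if x: "x \<in> {0..l}" for x
  proof -
    have "(nderiv l 1 u has_vector_derivative C x) (at x within {0..l})"
      by (rule FTC_cont[OF Cc n1 x])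
    then have "vector_derivative (nderiv l 1 u) (at x within {0..l}) = C x" by (rule vd_unique[OF l x])
    then show ?thesis by (simp only: nderiv_num(2) nderiv_Suc)
  qed
  have n3: "nderiv l 3 u x = C' x" if x: "x \<in> {0..l}" for x
  proof -
    have "nderiv l 3 u x = vector_derivative (nderiv l 2 u) (at x within {0..l})" by (simp only: nderiv_num(3) nderiv_Suc)
    also have "\<dots> = vector_derivative C (at x within {0..l})" by (rule vd_cong[OF n2 x])
    also have "\<dots> = C' x" by (rule vd_unique[OF l x dC[OF x]])
    finally show ?thesis .
  qed
  have C'int: "C' x = C' 0 + (LINT t:{0..x}|lebesgue. v t)" if "x \<in> {0..l}" for x
    unfolding C'_def V0 by (simp add: Vv_def)
  show "AE x in lebesgue. x \<in> {0..l} \<longrightarrow> v x = nderiv l 4 u x"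
  proof -
    have "AE x in lebesgue. x \<in> {0..l} \<longrightarrow> vector_derivative C' (at x within {0..l}) = v x"
      by (rule AC_deriv_ae[OF l vi C'int])
    then show ?thesis
    proof (rule eventually_mono, intro impI)
      fix x assume h: "x \<in> {0..l} \<longrightarrow> vector_derivative C' (at x within {0..l}) = v x" and x: "x \<in> {0..l}"
      have "nderiv l 4 u x = vector_derivative (nderiv l 3 u) (at x within {0..l})" by (simp only: nderiv_num(4) nderiv_Suc)
      also have "\<dots> = vector_derivative C' (at x within {0..l})" by (rule vd_cong[OF n3 x])
      finally show "v x = nderiv l 4 u x" using h x by simp
    qed
  qed
  show "Hk 4 l u"
    unfolding Hk_def
  proof (intro allI impI)
    fix j :: nat assume j: "j < 4"
    show "\<exists>g. L2_on {0..l} g \<and> (\<forall>x\<in>{0..l}. nderiv l j u x = nderiv l j u 0 + (LINT t:{0..x}|lebesgue. g t))"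
    proof (cases "j < 2")
      case True then show ?thesis using Hu unfolding Hk_def by blast
    next
      case False
      then consider "j = 2" | "j = 3" using j by linarith
      then show ?thesis
      proof cases
        case 1
        show ?thesis
        proof (rule exI[of _ C'], intro conjI ballI)
          show "L2_on {0..l} C'" by (rule L2_cont[OF C'c])
          fix x assume x: "x \<in> {0..l}"
          show "nderiv l j u x = nderiv l j u 0 + (LINT t:{0..x}|lebesgue. C' t)"
            unfolding 1 n2[OF x] n2[OF 0] by (rule FTC_C1[OF dC C'c x])
        qed
      next
        case 2
        show ?thesis
        proof (rule exI[of _ v], intro conjI ballI)
          show "L2_on {0..l} v" by (rule v)
          fix x assume x: "x \<in> {0..l}"
          show "nderiv l j u x = nderiv l j u 0 + (LINT t:{0..x}|lebesgue. v t)"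
            unfolding 2 n3[OF x] n3[OF 0] by (rule C'int[OF x])
        qed
      qed
    qed
  qed
qed

lemma bv01_zero:
  assumes "\<And>e. e < E \<Longrightarrow> h e 0 = 0 \<and> h e (len e) = 0 \<and> nderiv (len e) 1 (h e) 0 = 0 \<and> nderiv (len e) 1 (h e) (len e) = 0"
  shows "bv01 E len h = (\<lambda>i. 0)"
proof (rule ext)
  fix i
  consider "i < E" | "E \<le> i" "i < 2*E" | "2*E \<le> i" "i < 3*E" | "3*E \<le> i" "i < 4*E" | "4*E \<le> i" by linarith
  then show "bv01 E len h i = 0"
  proof cases
    case 1 then show ?thesis using assms[of i] by (simp add: bv01_def)
  next
    case 2 then show ?thesis using assms[of "i - E"] by (simp add: bv01_def)
  next
    case 3 then show ?thesis using assms[of "i - 2*E"] by (simp add: bv01_def)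
  next
    case 4 then show ?thesis using assms[of "i - 3*E"] by (simp add: bv01_def)
  next
    case 5 then show ?thesis by (simp add: bv01_def)
  qed
qed

lemma bv01_herm:
  assumes lpos: "\<And>e. e < E \<Longrightarrow> 0 < len e" and y: "y \<in> cvecs (4*E)"
  shows "bv01 E len (\<lambda>e. herm (len e) (y e) (y (E+e)) (- y (2*E+e)) (y (3*E+e))) = y"
proof (rule ext)
  fix i
  let ?h = "\<lambda>e. herm (len e) (y e) (y (E+e)) (- y (2*E+e)) (y (3*E+e))"
  consider "i < E" | "E \<le> i" "i < 2*E" | "2*E \<le> i" "i < 3*E" | "3*E \<le> i" "i < 4*E" | "4*E \<le> i" by linarith
  then show "bv01 E len ?h i = y i"
  proof cases
    case 1 then show ?thesis using herm_props(2)[OF lpos[of i]] by (simp add: bv01_def)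
  next
    case 2
    then have e: "i - E < E" and ei: "E + (i - E) = i" by auto
    then show ?thesis using 2 herm_props(3)[OF lpos[OF e]] by (simp add: bv01_def)
  next
    case 3
    then have e: "i - 2*E < E" and ei: "2*E + (i - 2*E) = i" by auto
    then show ?thesis using 3 herm_props(4)[OF lpos[OF e]] by (simp add: bv01_def)
  next
    case 4
    then have e: "i - 3*E < E" and ei: "3*E + (i - 3*E) = i" by auto
    then show ?thesis using 4 herm_props(5)[OF lpos[OF e]] by (simp add: bv01_def)
  next
    case 5 then show ?thesis using y by (simp add: bv01_def cvecs_def)
  qed
qed

lemma sum_single:
  assumes "finite A" "e \<in> A" "\<And>e'. e' \<in> A \<Longrightarrow> e' \<noteq> e \<Longrightarrow> f e' = 0"
  shows "sum f A = f e"
  using sum.remove[OF assms(1,2), of f] sum.neutral[of "A - {e}" f] assms(3) by auto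

theorem theorem4p3:
  fixes V :: "'v set" and src tgt :: "nat \<Rightarrow> 'v" and E :: nat and len :: "nat \<Rightarrow> real"
    and Y :: "(nat \<Rightarrow> complex) set" and R :: "(nat \<Rightarrow> complex) \<Rightarrow> (nat \<Rightarrow> complex)"
  assumes "network V src tgt E len"
    and "csubspace (4*E) Y"
    and "clinear_on Y R"
  shows "\<forall>u v. assoc_op E len (form_dom E len Y) (form_a E len R) u v \<longleftrightarrow> A_op E len Y R u v"
proof -
  have lpos: "\<And>e. e < E \<Longrightarrow> 0 < len e" using assms(1) by (simp add: network_def)
  have Ycv: "Y \<subseteq> cvecs (4*E)" and Y0: "(\<lambda>i. 0) \<in> Y" using assms(2) by (auto simp: csubspace_def)
  have RY: "\<And>y. y \<in> Y \<Longrightarrow> R y \<in> Y" using assms(3) by (simp add: clinear_on_def)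
  show ?thesis
  proof (intro allI iffI)
    fix u v
    assume AO: "assoc_op E len (form_dom E len Y) (form_a E len R) u v"
    have H2: "HkG 2 E len u" and bY: "bv01 E len u \<in> Y" and vL: "L2G E len v"
      and eq: "\<And>h. h \<in> form_dom E len Y \<Longrightarrow> form_a E len R u h = L2inner E len v h"
      using AO by (auto simp: assoc_op_def form_dom_def)
    have reg: "Hk 4 (len e) (u e) \<and> (AE x in lebesgue. x \<in> {0..len e} \<longrightarrow> v e x = nderiv (len e) 4 (u e) x)"
      if e: "e < E" for e
    proof -
      have le: "0 < len e" by (rule lpos[OF e])
      have He: "Hk 2 (len e) (u e)" using H2 e by (simp add: HkG_def)
      have ve: "L2_on {0..len e} (v e)" using vL e by (simp add: L2G_def)
      have H: "(LINT x:{0..len e}|lebesgue. nderiv (len e) 2 (u e) x * cnj (nderiv (len e) 2 \<phi> x)) = (LINT x:{0..len e}|lebesgue. v e x * cnj (\<phi> x))"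
        if H\<phi>: "Hk 2 (len e) \<phi>" and b: "\<phi> 0 = 0" "\<phi> (len e) = 0" "nderiv (len e) 1 \<phi> 0 = 0" "nderiv (len e) 1 \<phi> (len e) = 0" for \<phi>
      proof -
        define h where "h = (\<lambda>e'. if e' = e then \<phi> else (\<lambda>_::real. 0::complex))"
        have hH: "HkG 2 E len h" unfolding HkG_def h_def using H\<phi> zero_fun_props(1)[OF lpos] by auto
        have hb: "bv01 E len h = (\<lambda>i. 0)"
        proof (rule bv01_zero)
          fix e' assume e': "e' < E"
          show "h e' 0 = 0 \<and> h e' (len e') = 0 \<and> nderiv (len e') 1 (h e') 0 = 0 \<and> nderiv (len e') 1 (h e') (len e') = 0"
          proof (cases "e' = e")
            case True then show ?thesis using b by (simp add: h_def)
          next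
            case False
            have "0 \<in> {0..len e'}" "len e' \<in> {0..len e'}" using lpos[OF e'] by auto
            then show ?thesis using False zero_fun_props(2)[OF lpos[OF e']] by (simp add: h_def)
          qed
        qed
        have hD: "h \<in> form_dom E len Y" using hH hb Y0 by (simp add: form_dom_def)
        have s1: "form_a E len R u h = (LINT x:{0..len e}|lebesgue. nderiv (len e) 2 (u e) x * cnj (nderiv (len e) 2 \<phi> x))"
        proof -
          have "form_a E len R u h = (\<Sum>e'<E. LINT x:{0..len e'}|lebesgue. nderiv (len e') 2 (u e') x * cnj (nderiv (len e') 2 (h e') x))"
            unfolding form_a_def hb cinner_zero_right by simp
          also have "\<dots> = (LINT x:{0..len e}|lebesgue. nderiv (len e) 2 (u e) x * cnj (nderiv (len e) 2 (h e) x))"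
          proof (rule sum_single)
            show "finite {..<E}" by simp
            show "e \<in> {..<E}" using e by simp
            fix e' assume e': "e' \<in> {..<E}" "e' \<noteq> e"
            have "(LINT x:{0..len e'}|lebesgue. nderiv (len e') 2 (u e') x * cnj (nderiv (len e') 2 (h e') x)) = (LINT x:{0..len e'}|lebesgue. (0::complex))"
              by (rule set_lebesgue_integral_cong) (use e' zero_fun_props(3)[OF lpos[of e']] in \<open>auto simp: h_def\<close>)
            then show "(LINT x:{0..len e'}|lebesgue. nderiv (len e') 2 (u e') x * cnj (nderiv (len e') 2 (h e') x)) = 0"
              by (simp add: set_lebesgue_integral_def)
          qed
          finally show ?thesis by (simp add: h_def)
        qed
        have s2: "L2inner E len v h = (LINT x:{0..len e}|lebesgue. v e x * cnj (\<phi> x))"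
        proof -
          have "L2inner E len v h = (LINT x:{0..len e}|lebesgue. v e x * cnj (h e x))"
            unfolding L2inner_def
          proof (rule sum_single)
            show "finite {..<E}" by simp
            show "e \<in> {..<E}" using e by simp
            fix e' assume e': "e' \<in> {..<E}" "e' \<noteq> e"
            then show "(LINT x:{0..len e'}|lebesgue. v e' x * cnj (h e' x)) = 0"
              by (simp add: h_def set_lebesgue_integral_def)
          qed
          then show ?thesis by (simp add: h_def)
        qed
        show ?thesis using eq[OF hD] s1 s2 by simp
      qed
      show ?thesis using edge_reg[OF le He ve H] by blast
    qed
    have H4: "HkG 4 E len u" using reg by (simp add: HkG_def)
    have ae: "\<And>e. e < E \<Longrightarrow> AE x in lebesgue. x \<in> {0..len e} \<longrightarrow> v e x = nderiv (len e) 4 (u e) x"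
      using reg by blast
    define w where "w = (\<lambda>i. bv32 E len u i + R (bv01 E len u) i)"
    have wperp: "w \<in> cperp (4*E) Y"
      unfolding cperp_def
    proof (intro CollectI conjI ballI)
      show "w \<in> cvecs (4*E)" using RY[OF bY] Ycv by (auto simp: w_def cvecs_def bv32_def)
      fix y assume y: "y \<in> Y"
      define h where "h = (\<lambda>e. herm (len e) (y e) (y (E+e)) (- y (2*E+e)) (y (3*E+e)))"
      have hb: "bv01 E len h = y" unfolding h_def by (rule bv01_herm[OF lpos]) (use y Ycv in auto)
      have hH: "HkG 2 E len h" unfolding HkG_def h_def using herm_props(1)[OF lpos] by auto
      have hD: "h \<in> form_dom E len Y" using hH hb y by (simp add: form_dom_def)
      have "form_a E len R u h = L2inner E len v h - cinner (4*E) w (bv01 E len h)"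
        unfolding w_def by (rule form_green[OF lpos H4 vL ae hH])
      then show "cinner (4*E) w y = 0" using eq[OF hD] hb by simp
    qed
    show "A_op E len Y R u v"
      unfolding A_op_def A_dom_def using H4 bY wperp vL ae by (auto simp: w_def)
  next
    fix u v
    assume AO: "A_op E len Y R u v"
    have H4: "HkG 4 E len u" and bY: "bv01 E len u \<in> Y"
      and wperp: "(\<lambda>i. bv32 E len u i + R (bv01 E len u) i) \<in> cperp (4*E) Y"
      and vL: "L2G E len v" and ae: "\<And>e. e < E \<Longrightarrow> AE x in lebesgue. x \<in> {0..len e} \<longrightarrow> v e x = nderiv (len e) 4 (u e) x"
      using AO by (auto simp: A_op_def A_dom_def)
    have H2: "HkG 2 E len u" using H4 by (auto simp: HkG_def intro: Hk_mono)
    show "assoc_op E len (form_dom E len Y) (form_a E len R) u v"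
      unfolding assoc_op_def
    proof (intro conjI ballI)
      show "u \<in> form_dom E len Y" using H2 bY by (simp add: form_dom_def)
      show "L2G E len v" by (rule vL)
      fix h assume hD: "h \<in> form_dom E len Y"
      then have hH: "HkG 2 E len h" and hY: "bv01 E len h \<in> Y" by (auto simp: form_dom_def)
      have "cinner (4*E) (\<lambda>i. bv32 E len u i + R (bv01 E len u) i) (bv01 E len h) = 0"
        using wperp hY by (simp add: cperp_def)
      then show "form_a E len R u h = L2inner E len v h"
        using form_green[OF lpos H4 vL ae hH] by simp
    qed
  qed
qed


end
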